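(* Let $(M,g)$ be a space-time of dimension $n>3$ carrying two smooth vector fields $u,w$ with $u^ku_k=w^kw_k=-1$, $(u^kw_k)^2\neq1$, $\nabla_iu_j=\varphi(u_iu_j+g_{ij})$ and $\nabla_iw_j=\lambda(w_iw_j+g_{ij})$ for scalar fields $\varphi,\lambda$. If $\nabla_i\varphi=-u_i\,u^k\nabla_k\varphi$, then $\nabla_i\lambda=-w_i\,w^k\nabla_k\lambda$.
   Context: A space-time is a Lorentzian manifold with metric of signature $(-,+,\dots,+)$; $\nabla$ is its Levi-Civita connection. *)

theory Defs
  imports "HOL-Analysis.Analysis"
begin

text \<open>Local-coordinate rendering of a space-time: a chart domain U (open in R^n)
  with a smooth Lorentzian metric g. Indices range over the finite type 'n.\<close>

definition partial :: "'n::finite \<Rightarrow> (real^'n \<Rightarrow> real) \<Rightarrow> real^'n \<Rightarrow> real" where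
  "partial i f x = frechet_derivative f (at x) (axis i 1)"

fun Ck :: "nat \<Rightarrow> (real^'n::finite) set \<Rightarrow> (real^'n \<Rightarrow> real) \<Rightarrow> bool" where
  "Ck 0 U f = continuous_on U f"
| "Ck (Suc k) U f = (f differentiable_on U \<and> (\<forall>i. Ck k U (partial i f)))"

definition smooth_on :: "(real^'n::finite) set \<Rightarrow> (real^'n \<Rightarrow> real) \<Rightarrow> bool" where
  "smooth_on U f = (\<forall>k. Ck k U f)"

definition lorentzian :: "real^('n::finite)^'n \<Rightarrow> bool" where
  "lorentzian G = (transpose G = G \<and>
     (\<exists>(P::real^'n^'n) i0. invertible P \<and>
        transpose P ** G ** P = (\<chi> i j. if i = j then (if i = i0 then -1 else 1) else 0)))"

definition lorentz_metric_on :: "(real^'n::finite) set \<Rightarrow> (real^'n \<Rightarrow> real^'n^'n) \<Rightarrow> bool" where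
  "lorentz_metric_on U g = ((\<forall>x\<in>U. lorentzian (g x)) \<and>
     (\<forall>i j. smooth_on U (\<lambda>x. g x $ i $ j)))"

definition ginv :: "(real^'n::finite \<Rightarrow> real^'n^'n) \<Rightarrow> real^'n \<Rightarrow> 'n \<Rightarrow> 'n \<Rightarrow> real" where
  "ginv g x k l = matrix_inv (g x) $ k $ l"

definition christoffel :: "(real^'n::finite \<Rightarrow> real^'n^'n) \<Rightarrow> real^'n \<Rightarrow> 'n \<Rightarrow> 'n \<Rightarrow> 'n \<Rightarrow> real" where
  "christoffel g x k i j = (1/2) * (\<Sum>l\<in>UNIV. ginv g x k l *
      (partial i (\<lambda>y. g y $ j $ l) x + partial j (\<lambda>y. g y $ i $ l) x
       - partial l (\<lambda>y. g y $ i $ j) x))"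

text \<open>Lowering an index: u_i = g_{ij} u^j (vector fields given by contravariant components).\<close>
definition lower :: "(real^'n::finite \<Rightarrow> real^'n^'n) \<Rightarrow> (real^'n \<Rightarrow> real^'n) \<Rightarrow> real^'n \<Rightarrow> 'n \<Rightarrow> real" where
  "lower g u x i = (\<Sum>j\<in>UNIV. g x $ i $ j * u x $ j)"

definition cov_deriv :: "(real^'n::finite \<Rightarrow> real^'n^'n) \<Rightarrow> (real^'n \<Rightarrow> real^'n) \<Rightarrow> real^'n \<Rightarrow> 'n \<Rightarrow> 'n \<Rightarrow> real" where
  "cov_deriv g u x i j = partial i (\<lambda>y. lower g u y j) x
      - (\<Sum>k\<in>UNIV. christoffel g x k i j * lower g u x k)"

definition gprod :: "(real^'n::finite \<Rightarrow> real^'n^'n) \<Rightarrow> (real^'n \<Rightarrow> real^'n) \<Rightarrow> (real^'n \<Rightarrow> real^'n) \<Rightarrow> real^'n \<Rightarrow> real" where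
  "gprod g u w x = (\<Sum>k\<in>UNIV. u x $ k * lower g w x k)"

definition smooth_vf_on :: "(real^'n::finite) set \<Rightarrow> (real^'n \<Rightarrow> real^'n) \<Rightarrow> bool" where
  "smooth_vf_on U u = (\<forall>k. smooth_on U (\<lambda>x. u x $ k))"

end

theory Submission
  imports Defs
begin


lemma partial_eqI: "(f has_derivative f') (at x) \<Longrightarrow> partial i f x = f' (axis i 1)"
  unfolding partial_def using frechet_derivative_at by fastforce

lemma partial_cong:
  assumes "open U" "x \<in> U" "\<And>y. y \<in> U \<Longrightarrow> f y = h y"
  shows "partial i f x = partial i h x"
proof -
  have "(\<lambda>f'. (f has_derivative f') (at x)) = (\<lambda>f'. (h has_derivative f') (at x))"
    using has_derivative_transform_within_open[OF _ assms(1,2), of f _ UNIV h]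
          has_derivative_transform_within_open[OF _ assms(1,2), of h _ UNIV f] assms(3)
    by (intro ext iffI) auto
  then show ?thesis unfolding partial_def frechet_derivative_def by (simp only:)
qed

lemma diff_cong:
  assumes "open U" "x \<in> U" "\<And>y. y \<in> U \<Longrightarrow> f y = h y" "f differentiable (at x)"
  shows "h differentiable (at x)"
  using assms has_derivative_transform_within_open[OF _ assms(1,2), of f _ UNIV h]
  unfolding differentiable_def by auto

lemma hd: "f differentiable (at x) \<Longrightarrow> (f has_derivative frechet_derivative f (at x)) (at x)"
  using frechet_derivative_works by blast

lemma partial_add: assumes "f differentiable (at x)" "h differentiable (at x)"
  shows "partial i (\<lambda>y. f y + h y) x = partial i f x + partial i h x"
proof -
  have "((\<lambda>y. f y + h y) has_derivative (\<lambda>v. frechet_derivative f (at x) v + frechet_derivative h (at x) v)) (at x)"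
    by (rule has_derivative_add[OF hd[OF assms(1)] hd[OF assms(2)]])
  from partial_eqI[OF this] show ?thesis by (simp add: partial_def)
qed

lemma partial_diff: assumes "f differentiable (at x)" "h differentiable (at x)"
  shows "partial i (\<lambda>y. f y - h y) x = partial i f x - partial i h x"
proof -
  have "((\<lambda>y. f y - h y) has_derivative (\<lambda>v. frechet_derivative f (at x) v - frechet_derivative h (at x) v)) (at x)"
    by (rule has_derivative_diff[OF hd[OF assms(1)] hd[OF assms(2)]])
  from partial_eqI[OF this] show ?thesis by (simp add: partial_def)
qed

lemma partial_mult: assumes "f differentiable (at x)" "h differentiable (at x)"
  shows "partial i (\<lambda>y. f y * h y) x = partial i f x * h x + f x * partial i h x"
proof -
  have "((\<lambda>y. f y * h y) has_derivative (\<lambda>v. f x * frechet_derivative h (at x) v + frechet_derivative f (at x) v * h x)) (at x)"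
    by (rule has_derivative_mult[OF hd[OF assms(1)] hd[OF assms(2)]])
  from partial_eqI[OF this] show ?thesis by (simp add: partial_def)
qed

lemma partial_const: "partial i (\<lambda>y. c) x = 0"
  using partial_eqI[OF has_derivative_const] by metis

lemma partial_cmult: "partial i (\<lambda>y. c * f y) x = c * partial i f x" if "f differentiable (at x)"
proof -
  have "partial i (\<lambda>y. c * f y) x = partial i (\<lambda>y. c) x * f x + c * partial i f x"
    by (rule partial_mult) (auto simp: that)
  then show ?thesis by (simp add: partial_const)
qed

lemma partial_sum: "finite S \<Longrightarrow> (\<And>k. k \<in> S \<Longrightarrow> f k differentiable (at x)) \<Longrightarrow>
  partial i (\<lambda>y. \<Sum>k\<in>S. f k y) x = (\<Sum>k\<in>S. partial i (f k) x)"
proof (induction S rule: finite_induct)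
  case empty then show ?case by (simp add: partial_const)
next
  case (insert a S)
  have "partial i (\<lambda>y. \<Sum>k\<in>insert a S. f k y) x = partial i (\<lambda>y. f a y + (\<Sum>k\<in>S. f k y)) x"
    using insert by simp
  also have "\<dots> = partial i (f a) x + partial i (\<lambda>y. \<Sum>k\<in>S. f k y) x"
    using insert by (intro partial_add) (auto intro!: differentiable_sum)
  finally show ?case using insert by simp
qed

lemma Ck_cong: "open U \<Longrightarrow> Ck k U f \<Longrightarrow> (\<And>y. y \<in> U \<Longrightarrow> f y = h y) \<Longrightarrow> Ck k U h"
proof (induction k arbitrary: f h)
  case 0 then show ?case using continuous_on_cong by fastforce
next
  case (Suc k)
  have d: "h differentiable_on U"
  proof -
    have "f differentiable_on U" using Suc.prems(2) by simp
    then have "\<forall>y\<in>U. f differentiable at y"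
      using differentiable_on_eq_differentiable_at[OF Suc.prems(1)] by blast
    then have "\<forall>y\<in>U. h differentiable at y"
      using diff_cong[OF Suc.prems(1), of _ f h] Suc.prems(3) by blast
    then show ?thesis using differentiable_on_eq_differentiable_at[OF Suc.prems(1)] by blast
  qed
  have "Ck k U (partial i h)" for i
  proof (rule Suc.IH[OF Suc.prems(1)])
    show "Ck k U (partial i f)" using Suc.prems(2) by simp
    show "partial i f y = partial i h y" if "y \<in> U" for y
      using partial_cong[OF Suc.prems(1) that Suc.prems(3)] .
  qed
  then show ?case using d by simp
qed

lemma Ck_mono: "Ck (Suc k) U f \<Longrightarrow> Ck k U f"
proof (induction k arbitrary: f)
  case 0 then show ?case by (simp add: differentiable_imp_continuous_on)
next
  case (Suc k)
  have "Ck k U (partial i f)" for i using Suc.IH[of "partial i f"] Suc.prems by simp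
  then show ?case using Suc.prems by simp
qed

lemma Ck_le: "m \<le> k \<Longrightarrow> Ck k U f \<Longrightarrow> Ck m U f"
proof (induction k)
  case 0 then show ?case by simp
next
  case (Suc k) then show ?case using Ck_mono by (metis le_Suc_eq)
qed

lemma Ck_diffat: "open U \<Longrightarrow> Ck (Suc k) U f \<Longrightarrow> x \<in> U \<Longrightarrow> f differentiable (at x)"
  using differentiable_on_eq_differentiable_at by auto

lemma Ck_add: "open U \<Longrightarrow> Ck k U f \<Longrightarrow> Ck k U h \<Longrightarrow> Ck k U (\<lambda>y. f y + h y)"
proof (induction k arbitrary: f h)
  case 0 then show ?case by (auto intro: continuous_on_add)
next
  case (Suc k)
  have "Ck k U (partial i (\<lambda>y. f y + h y))" for i
  proof -
    have "Ck k U (\<lambda>y. partial i f y + partial i h y)" using Suc by auto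
    then show ?thesis
      by (rule Ck_cong[OF Suc.prems(1)])
        (rule partial_add[symmetric, OF Ck_diffat[OF Suc.prems(1,2)] Ck_diffat[OF Suc.prems(1,3)]])
  qed
  then show ?case using Suc.prems by (auto intro: differentiable_on_add)
qed

lemma Ck_const: "Ck k U (\<lambda>y. c)"
proof (induction k arbitrary: c)
  case 0 then show ?case by simp
next
  case (Suc k)
  have e: "partial i (\<lambda>y. c) = (\<lambda>y. 0)" for i by (rule ext) (simp add: partial_const)
  have "Ck k U (partial i (\<lambda>y. c))" for i unfolding e by (rule Suc.IH)
  then show ?case by simp
qed

lemma Ck_mult: "open U \<Longrightarrow> Ck k U f \<Longrightarrow> Ck k U h \<Longrightarrow> Ck k U (\<lambda>y. f y * h y)"
proof (induction k arbitrary: f h)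
  case 0 then show ?case by (auto intro: continuous_on_mult)
next
  case (Suc k)
  have "Ck k U (partial i (\<lambda>y. f y * h y))" for i
  proof -
    have "Ck k U (\<lambda>y. partial i f y * h y + f y * partial i h y)"
      using Suc.prems Suc.IH by (intro Ck_add Suc.IH) (auto intro: Ck_mono)
    then show ?thesis
      by (rule Ck_cong[OF Suc.prems(1)])
        (rule partial_mult[symmetric, OF Ck_diffat[OF Suc.prems(1,2)] Ck_diffat[OF Suc.prems(1,3)]])
  qed
  then show ?case using Suc.prems by (auto intro: differentiable_on_mult)
qed

lemma Ck_sum: "open U \<Longrightarrow> (\<And>j. j \<in> S \<Longrightarrow> Ck k U (f j)) \<Longrightarrow> Ck k U (\<lambda>y. \<Sum>j\<in>S. f j y)"
proof (induction S rule: infinite_finite_induct)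
  case (infinite A) then show ?case by (simp add: Ck_const)
next
  case empty then show ?case by (simp add: Ck_const)
next
  case (insert a S) then show ?case by (simp add: Ck_add)
qed

lemma Ck_prod: "open U \<Longrightarrow> (\<And>j. j \<in> S \<Longrightarrow> Ck k U (f j)) \<Longrightarrow> Ck k U (\<lambda>y. \<Prod>j\<in>S. f j y)"
proof (induction S rule: infinite_finite_induct)
  case (infinite A) then show ?case by (simp add: Ck_const)
next
  case empty then show ?case by (simp add: Ck_const)
next
  case (insert a S) then show ?case by (simp add: Ck_mult)
qed

lemma sm_add: "open U \<Longrightarrow> smooth_on U f \<Longrightarrow> smooth_on U h \<Longrightarrow> smooth_on U (\<lambda>y. f y + h y)"
  unfolding smooth_on_def by (auto intro: Ck_add)
lemma sm_mult: "open U \<Longrightarrow> smooth_on U f \<Longrightarrow> smooth_on U h \<Longrightarrow> smooth_on U (\<lambda>y. f y * h y)"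
  unfolding smooth_on_def by (auto intro: Ck_mult)
lemma sm_const: "smooth_on U (\<lambda>y. c)"
  unfolding smooth_on_def by (auto intro: Ck_const)
lemma sm_sum: "open U \<Longrightarrow> (\<And>j. j \<in> S \<Longrightarrow> smooth_on U (f j)) \<Longrightarrow> smooth_on U (\<lambda>y. \<Sum>j\<in>S. f j y)"
  unfolding smooth_on_def by (auto intro: Ck_sum)
lemma sm_prod: "open U \<Longrightarrow> (\<And>j. j \<in> S \<Longrightarrow> smooth_on U (f j)) \<Longrightarrow> smooth_on U (\<lambda>y. \<Prod>j\<in>S. f j y)"
  unfolding smooth_on_def by (auto intro: Ck_prod)
lemma sm_partial: "smooth_on U f \<Longrightarrow> smooth_on U (partial i f)"
  unfolding smooth_on_def by (metis Ck.simps(2))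
lemma sm_diffat: "open U \<Longrightarrow> smooth_on U f \<Longrightarrow> x \<in> U \<Longrightarrow> f differentiable (at x)"
  unfolding smooth_on_def using Ck_diffat by blast
lemma sm_C2: "smooth_on U f \<Longrightarrow> Ck 2 U f"
  unfolding smooth_on_def by blast
lemma sm_cong: "open U \<Longrightarrow> smooth_on U f \<Longrightarrow> (\<And>y. y \<in> U \<Longrightarrow> f y = h y) \<Longrightarrow> smooth_on U h"
  unfolding smooth_on_def using Ck_cong by blast




lemma line_deriv:
  assumes "f differentiable (at (p + s *\<^sub>R axis i 1))"
  shows "((\<lambda>t. f (p + t *\<^sub>R axis i 1)) has_real_derivative partial i f (p + s *\<^sub>R axis i 1)) (at s)"
proof -
  let ?F = "frechet_derivative f (at (p + s *\<^sub>R axis i 1))"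
  have l: "((\<lambda>t. p + t *\<^sub>R axis i 1) has_derivative (\<lambda>t. t *\<^sub>R axis i 1)) (at s)"
    by (auto intro!: derivative_eq_intros)
  have "((\<lambda>t. f (p + t *\<^sub>R axis i 1)) has_derivative (\<lambda>t. ?F (t *\<^sub>R axis i 1))) (at s)"
    using has_derivative_compose[OF l hd[OF assms]] by simp
  moreover have "linear ?F" using hd[OF assms] has_derivative_linear by blast
  then have "(\<lambda>t. ?F (t *\<^sub>R axis i 1)) = (\<lambda>t. partial i f (p + s *\<^sub>R axis i 1) * t)"
    unfolding partial_def by (auto simp: linear_scale)
  ultimately show ?thesis unfolding has_field_derivative_def by simp
qed

lemma mvt_square:
  fixes f :: "real^'n::finite \<Rightarrow> real"
  assumes U: "open U" and df: "f differentiable_on U" and dF: "(partial i f) differentiable_on U"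
    and h: "h > 0"
    and sq: "\<And>\<sigma> \<tau>. 0 \<le> \<sigma> \<Longrightarrow> \<sigma> \<le> h \<Longrightarrow> 0 \<le> \<tau> \<Longrightarrow> \<tau> \<le> h \<Longrightarrow>
               x + \<sigma> *\<^sub>R axis i 1 + \<tau> *\<^sub>R axis j 1 \<in> U"
  shows "\<exists>\<sigma> \<tau>. 0 < \<sigma> \<and> \<sigma> < h \<and> 0 < \<tau> \<and> \<tau> < h \<and>
     f (x + h *\<^sub>R axis i 1 + h *\<^sub>R axis j 1) - f (x + h *\<^sub>R axis i 1) - f (x + h *\<^sub>R axis j 1) + f x
     = h * h * partial j (partial i f) (x + \<sigma> *\<^sub>R axis i 1 + \<tau> *\<^sub>R axis j 1)"
proof -
  define ei :: "real^'n" where "ei = axis i 1"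
  define ej :: "real^'n" where "ej = axis j 1"
  have dfa: "f differentiable (at y)" if "y \<in> U" for y
    using df U that differentiable_on_eq_differentiable_at by blast
  have dFa: "partial i f differentiable (at y)" if "y \<in> U" for y
    using dF U that differentiable_on_eq_differentiable_at by blast
  define \<phi> where "\<phi> \<sigma> = f (x + h *\<^sub>R ej + \<sigma> *\<^sub>R ei) - f (x + \<sigma> *\<^sub>R ei)" for \<sigma>
  have d\<phi>: "(\<phi> has_real_derivative (partial i f (x + h *\<^sub>R ej + \<sigma> *\<^sub>R ei) - partial i f (x + \<sigma> *\<^sub>R ei))) (at \<sigma>)"
    if "0 \<le> \<sigma>" "\<sigma> \<le> h" for \<sigma>
  proof -
    have m1: "x + h *\<^sub>R ej + \<sigma> *\<^sub>R ei \<in> U" using sq[of \<sigma> h] that h unfolding ei_def ej_def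
      by (simp add: algebra_simps)
    have m2: "x + \<sigma> *\<^sub>R ei \<in> U" using sq[of \<sigma> 0] that h unfolding ei_def ej_def by simp
    show ?thesis unfolding \<phi>_def[abs_def]
      using DERIV_diff[OF line_deriv[OF dfa[OF m1[unfolded ei_def]]] line_deriv[OF dfa[OF m2[unfolded ei_def]]]]
      unfolding ei_def by simp
  qed
  obtain \<sigma> where s: "0 < \<sigma>" "\<sigma> < h"
    and s1: "\<phi> h - \<phi> 0 = (h - 0) * (partial i f (x + h *\<^sub>R ej + \<sigma> *\<^sub>R ei) - partial i f (x + \<sigma> *\<^sub>R ei))"
    using MVT2[OF h d\<phi>] by blast
  define \<psi> where "\<psi> \<tau> = partial i f (x + \<sigma> *\<^sub>R ei + \<tau> *\<^sub>R ej)" for \<tau>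
  have d\<psi>: "(\<psi> has_real_derivative partial j (partial i f) (x + \<sigma> *\<^sub>R ei + \<tau> *\<^sub>R ej)) (at \<tau>)"
    if "0 \<le> \<tau>" "\<tau> \<le> h" for \<tau>
  proof -
    have m: "x + \<sigma> *\<^sub>R ei + \<tau> *\<^sub>R ej \<in> U" using sq[of \<sigma> \<tau>] that s unfolding ei_def ej_def by simp
    show ?thesis unfolding \<psi>_def[abs_def] ej_def
      using line_deriv[OF dFa[OF m[unfolded ej_def]]] by simp
  qed
  obtain \<tau> where t: "0 < \<tau>" "\<tau> < h"
    and t1: "\<psi> h - \<psi> 0 = (h - 0) * partial j (partial i f) (x + \<sigma> *\<^sub>R ei + \<tau> *\<^sub>R ej)"
    using MVT2[OF h d\<psi>] by blast
  have "f (x + h *\<^sub>R axis i 1 + h *\<^sub>R axis j 1) - f (x + h *\<^sub>R axis i 1) - f (x + h *\<^sub>R axis j 1) + f x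
      = \<phi> h - \<phi> 0" unfolding \<phi>_def ei_def ej_def by (simp add: algebra_simps)
  also have "\<dots> = h * (\<psi> h - \<psi> 0)" using s1 unfolding \<psi>_def by (simp add: algebra_simps)
  also have "\<dots> = h * h * partial j (partial i f) (x + \<sigma> *\<^sub>R ei + \<tau> *\<^sub>R ej)" using t1 by simp
  finally show ?thesis using s t unfolding ei_def ej_def by blast
qed

lemma small_pt:
  fixes x :: "real^'n::finite"
  assumes "0 \<le> \<sigma>" "\<sigma> \<le> h" "0 \<le> \<tau>" "\<tau> \<le> h" "3 * h = d" "d > 0"
  shows "dist (x + \<sigma> *\<^sub>R axis i 1 + \<tau> *\<^sub>R axis j 1) x < d"
proof -
  have "dist (x + \<sigma> *\<^sub>R axis i 1 + \<tau> *\<^sub>R axis j 1) x = norm (\<sigma> *\<^sub>R (axis i 1::real^'n) + \<tau> *\<^sub>R (axis j 1::real^'n))"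
    by (simp add: dist_norm)
  also have "\<dots> \<le> norm (\<sigma> *\<^sub>R (axis i 1::real^'n)) + norm (\<tau> *\<^sub>R (axis j 1::real^'n))"
    by (rule norm_triangle_ineq)
  also have "\<dots> = \<sigma> + \<tau>" using assms by simp
  finally show ?thesis using assms by linarith
qed

lemma schwarz:
  fixes f :: "real^'n::finite \<Rightarrow> real"
  assumes U: "open U" and x: "x \<in> U" and df: "f differentiable_on U"
    and dFi: "(partial i f) differentiable_on U" and dFj: "(partial j f) differentiable_on U"
    and c1: "continuous_on U (partial j (partial i f))"
    and c2: "continuous_on U (partial i (partial j f))"
  shows "partial j (partial i f) x = partial i (partial j f) x"
proof (rule ccontr)
  let ?a = "partial j (partial i f) x" and ?b = "partial i (partial j f) x"
  assume ne: "?a \<noteq> ?b"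
  define e where "e = \<bar>?a - ?b\<bar> / 2"
  have e: "e > 0" using ne unfolding e_def by simp
  have "continuous (at x) (partial j (partial i f))" using c1 U x continuous_on_eq_continuous_at by blast
  then obtain d1 where d1: "d1 > 0" "\<And>y. dist y x < d1 \<Longrightarrow> dist (partial j (partial i f) y) ?a < e"
    using e unfolding continuous_at_eps_delta by blast
  have "continuous (at x) (partial i (partial j f))" using c2 U x continuous_on_eq_continuous_at by blast
  then obtain d2 where d2: "d2 > 0" "\<And>y. dist y x < d2 \<Longrightarrow> dist (partial i (partial j f) y) ?b < e"
    using e unfolding continuous_at_eps_delta by blast
  obtain d3 where d3: "d3 > 0" "ball x d3 \<subseteq> U" using U x openE by blast
  define d where "d = min d1 (min d2 d3)"
  have d: "d > 0" using d1 d2 d3 unfolding d_def by simp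
  define h where "h = d / 3"
  have h: "h > 0" "3 * h = d" using d unfolding h_def by auto
  have inU: "y \<in> U" if "dist y x < d" for y using that d3 unfolding d_def by (auto simp: dist_commute)
  obtain \<sigma> \<tau> where st: "0 < \<sigma>" "\<sigma> < h" "0 < \<tau>" "\<tau> < h"
    and e1: "f (x + h *\<^sub>R axis i 1 + h *\<^sub>R axis j 1) - f (x + h *\<^sub>R axis i 1) - f (x + h *\<^sub>R axis j 1) + f x
     = h * h * partial j (partial i f) (x + \<sigma> *\<^sub>R axis i 1 + \<tau> *\<^sub>R axis j 1)"
    using mvt_square[OF U df dFi h(1), of x j] inU small_pt[OF _ _ _ _ h(2) d] by blast
  obtain \<sigma>' \<tau>' where st': "0 < \<sigma>'" "\<sigma>' < h" "0 < \<tau>'" "\<tau>' < h"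
    and e2: "f (x + h *\<^sub>R axis j 1 + h *\<^sub>R axis i 1) - f (x + h *\<^sub>R axis j 1) - f (x + h *\<^sub>R axis i 1) + f x
     = h * h * partial i (partial j f) (x + \<sigma>' *\<^sub>R axis j 1 + \<tau>' *\<^sub>R axis i 1)"
    using mvt_square[OF U df dFj h(1), of x i] inU small_pt[OF _ _ _ _ h(2) d] by blast
  have "h * h * partial j (partial i f) (x + \<sigma> *\<^sub>R axis i 1 + \<tau> *\<^sub>R axis j 1)
      = h * h * partial i (partial j f) (x + \<sigma>' *\<^sub>R axis j 1 + \<tau>' *\<^sub>R axis i 1)"
    using e1 e2 by (simp add: algebra_simps)
  then have eq: "partial j (partial i f) (x + \<sigma> *\<^sub>R axis i 1 + \<tau> *\<^sub>R axis j 1)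
      = partial i (partial j f) (x + \<sigma>' *\<^sub>R axis j 1 + \<tau>' *\<^sub>R axis i 1)" using h by simp
  have "dist (x + \<sigma> *\<^sub>R axis i 1 + \<tau> *\<^sub>R axis j 1) x < d1"
    using small_pt[OF _ _ _ _ h(2) d, of \<sigma> \<tau> x i j] st unfolding d_def by auto
  then have A: "dist (partial j (partial i f) (x + \<sigma> *\<^sub>R axis i 1 + \<tau> *\<^sub>R axis j 1)) ?a < e" by (rule d1(2))
  have "dist (x + \<sigma>' *\<^sub>R axis j 1 + \<tau>' *\<^sub>R axis i 1) x < d2"
    using small_pt[OF _ _ _ _ h(2) d, of \<sigma>' \<tau>' x j i] st' unfolding d_def by auto
  then have B: "dist (partial i (partial j f) (x + \<sigma>' *\<^sub>R axis j 1 + \<tau>' *\<^sub>R axis i 1)) ?b < e" by (rule d2(2))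
  have gen: "\<And>P Q a b :: real. \<bar>P - a\<bar> < \<bar>a - b\<bar> / 2 \<Longrightarrow> \<bar>Q - b\<bar> < \<bar>a - b\<bar> / 2 \<Longrightarrow> P = Q \<Longrightarrow> False"
    by (simp add: abs_if split: if_split_asm)
  from A B eq show False unfolding e_def dist_real_def using gen by blast
qed

lemma schwarz_C2:
  assumes "open U" "x \<in> U" "Ck 2 U f"
  shows "partial j (partial i f) x = partial i (partial j f) x"
  using assms by (intro schwarz[OF assms(1,2)]) (auto simp: numeral_2_eq_2)




lemma sm_if: "smooth_on U f \<Longrightarrow> smooth_on U (\<lambda>y. if P then c else f y)"
  by (cases P) (auto simp: sm_const)

lemma lorentzian_det: assumes "lorentzian (G::real^'n::finite^'n)" shows "det G \<noteq> 0"
proof -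
  obtain P :: "real^'n^'n" and i0 where P: "transpose P ** G ** P = (\<chi> i j. if i = j then (if i = i0 then -1 else 1) else 0)"
    using assms unfolding lorentzian_def by blast
  have "det (\<chi> i j. if i = j then (if i = i0 then -1 else 1) else (0::real)) = (\<Prod>i\<in>UNIV. if i = i0 then -1 else 1)"
    by (subst det_diagonal) auto
  also have "\<dots> \<noteq> 0" by (auto simp: prod_zero_iff)
  finally have "det (transpose P ** G ** P) \<noteq> 0" using P by simp
  then show ?thesis by (simp add: det_mul)
qed

lemma ssw: "(\<Sum>l\<in>UNIV. (a l::real) * (\<Sum>m\<in>UNIV. b l m * t m)) = (\<Sum>m\<in>UNIV. (\<Sum>l\<in>UNIV. a l * b l m) * t m)"
  unfolding sum_distrib_left sum_distrib_right mult.assoc by (rule sum.swap)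

lemma delta_l: "(\<Sum>m\<in>UNIV. (if (a::'a::finite) = m then 1 else 0) * (t m::real)) = t a"
proof -
  have e: "(\<lambda>m. (if a = m then 1 else 0) * t m) = (\<lambda>m. if a = m then t m else 0)" by auto
  show ?thesis unfolding e by simp
qed

lemma delta_l': "(\<Sum>m\<in>UNIV. (if m = (a::'a::finite) then 1 else 0) * (t m::real)) = t a"
proof -
  have e: "(\<lambda>m. (if m = a then 1 else 0) * t m) = (\<lambda>m. if a = m then t m else 0)" by auto
  show ?thesis unfolding e by simp
qed

lemma sum4_swap: "(\<Sum>k\<in>UNIV. \<Sum>m\<in>UNIV. \<Sum>a\<in>UNIV. \<Sum>b\<in>UNIV. (F k m a b::real))
    = (\<Sum>a\<in>UNIV. \<Sum>b\<in>UNIV. \<Sum>k\<in>UNIV. \<Sum>m\<in>UNIV. F k m a b)"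
proof -
  have "(\<Sum>k\<in>UNIV. \<Sum>m\<in>UNIV. \<Sum>a\<in>UNIV. \<Sum>b\<in>UNIV. F k m a b)
      = (\<Sum>k\<in>UNIV. \<Sum>a\<in>UNIV. \<Sum>m\<in>UNIV. \<Sum>b\<in>UNIV. F k m a b)"
    by (rule sum.cong[OF refl], rule sum.swap)
  also have "\<dots> = (\<Sum>k\<in>UNIV. \<Sum>a\<in>UNIV. \<Sum>b\<in>UNIV. \<Sum>m\<in>UNIV. F k m a b)"
    by (rule sum.cong[OF refl], rule sum.cong[OF refl], rule sum.swap)
  also have "\<dots> = (\<Sum>a\<in>UNIV. \<Sum>k\<in>UNIV. \<Sum>b\<in>UNIV. \<Sum>m\<in>UNIV. F k m a b)"
    by (rule sum.swap)
  also have "\<dots> = (\<Sum>a\<in>UNIV. \<Sum>b\<in>UNIV. \<Sum>k\<in>UNIV. \<Sum>m\<in>UNIV. F k m a b)"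
    by (rule sum.cong[OF refl], rule sum.swap)
  finally show ?thesis .
qed

lemma trace_sym:
  fixes H A B :: "'n::finite \<Rightarrow> 'n \<Rightarrow> real"
  assumes H: "\<And>i j. H i j = H j i"
  shows "(\<Sum>k\<in>UNIV. \<Sum>m\<in>UNIV. (\<Sum>a\<in>UNIV. \<Sum>b\<in>UNIV. H k a * A a b * H b m) * B k m)
       = (\<Sum>k\<in>UNIV. \<Sum>m\<in>UNIV. (\<Sum>a\<in>UNIV. \<Sum>b\<in>UNIV. H k a * B a b * H b m) * A k m)"
proof -
  have "(\<Sum>k\<in>UNIV. \<Sum>m\<in>UNIV. (\<Sum>a\<in>UNIV. \<Sum>b\<in>UNIV. H k a * A a b * H b m) * B k m)
      = (\<Sum>k\<in>UNIV. \<Sum>m\<in>UNIV. \<Sum>a\<in>UNIV. \<Sum>b\<in>UNIV. H k a * A a b * H b m * B k m)"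
    by (simp add: sum_distrib_right)
  also have "\<dots> = (\<Sum>a\<in>UNIV. \<Sum>b\<in>UNIV. \<Sum>k\<in>UNIV. \<Sum>m\<in>UNIV. H k a * A a b * H b m * B k m)"
    by (rule sum4_swap)
  also have "\<dots> = (\<Sum>a\<in>UNIV. \<Sum>b\<in>UNIV. \<Sum>k\<in>UNIV. \<Sum>m\<in>UNIV. H a k * B k m * H m b * A a b)"
  proof (intro sum.cong refl)
    fix a b k m
    have "H a k = H k a" "H m b = H b m" by (rule H)+
    then show "H k a * A a b * H b m * B k m = H a k * B k m * H m b * A a b" by (simp add: ac_simps)
  qed
  also have "\<dots> = (\<Sum>k\<in>UNIV. \<Sum>m\<in>UNIV. (\<Sum>a\<in>UNIV. \<Sum>b\<in>UNIV. H k a * B a b * H b m) * A k m)"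
    by (simp add: sum_distrib_right)
  finally show ?thesis .
qed

locale mst =
  fixes U :: "(real^'n::finite) set" and g :: "real^'n \<Rightarrow> real^'n^'n"
  assumes U: "open U" and metric: "lorentz_metric_on U g"
begin

lemma gsm: "smooth_on U (\<lambda>y. g y $ i $ j)"
  using metric unfolding lorentz_metric_on_def by blast

lemma gdiff: "y \<in> U \<Longrightarrow> (\<lambda>y. g y $ i $ j) differentiable (at y)"
  using sm_diffat[OF U gsm] by blast

lemma gsym: "y \<in> U \<Longrightarrow> g y $ i $ j = g y $ j $ i"
proof -
  assume "y \<in> U"
  then have "transpose (g y) = g y" using metric unfolding lorentz_metric_on_def lorentzian_def by blast
  then have "transpose (g y) $ i $ j = g y $ i $ j" by simp
  then show ?thesis by (simp add: transpose_def)
qed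

lemma detnz: "y \<in> U \<Longrightarrow> det (g y) \<noteq> 0"
  using metric lorentzian_det unfolding lorentz_metric_on_def by blast

lemma inv_both: "y \<in> U \<Longrightarrow> g y ** matrix_inv (g y) = mat 1 \<and> matrix_inv (g y) ** g y = mat 1"
proof -
  assume "y \<in> U"
  then have "invertible (g y)" using detnz invertible_det_nz by blast
  then show ?thesis unfolding invertible_def matrix_inv_def by (rule someI_ex)
qed

lemma inv_r: "y \<in> U \<Longrightarrow> (\<Sum>k\<in>UNIV. g y $ i $ k * ginv g y k j) = (if i = j then 1 else 0)"
proof -
  assume y: "y \<in> U"
  have "(g y ** matrix_inv (g y)) $ i $ j = mat 1 $ i $ j" using inv_both[OF y] by simp
  then show ?thesis unfolding ginv_def matrix_matrix_mult_def mat_def by simp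
qed

lemma inv_l: "y \<in> U \<Longrightarrow> (\<Sum>k\<in>UNIV. ginv g y i k * g y $ k $ j) = (if i = j then 1 else 0)"
proof -
  assume y: "y \<in> U"
  have "(matrix_inv (g y) ** g y) $ i $ j = mat 1 $ i $ j" using inv_both[OF y] by simp
  then show ?thesis unfolding ginv_def matrix_matrix_mult_def mat_def by simp
qed

lemma Hsym: "y \<in> U \<Longrightarrow> ginv g y i j = ginv g y j i"
proof -
  assume y: "y \<in> U"
  let ?H = "matrix_inv (g y)"
  have gt: "transpose (g y) = g y" using y metric unfolding lorentz_metric_on_def lorentzian_def by blast
  have "transpose ?H = transpose ?H ** (g y ** ?H)" using inv_both[OF y] by simp
  also have "\<dots> = (transpose ?H ** transpose (g y)) ** ?H" using gt by (simp add: matrix_mul_assoc)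
  also have "\<dots> = transpose (g y ** ?H) ** ?H" by (simp add: matrix_transpose_mul)
  also have "\<dots> = ?H" using inv_both[OF y] by simp
  finally have "transpose ?H = ?H" .
  then have "transpose ?H $ i $ j = ?H $ i $ j" by simp
  then show ?thesis unfolding ginv_def by (simp add: transpose_def)
qed

lemma dgsym: "y \<in> U \<Longrightarrow> partial k (\<lambda>z. g z $ i $ j) y = partial k (\<lambda>z. g z $ j $ i) y"
  by (rule partial_cong[OF U]) (auto intro: gsym)

lemma ginv_cramer: "y \<in> U \<Longrightarrow> ginv g y k m =
   det (\<chi> i j. if j = k then axis m 1 $ i else g y $ i $ j) / det (g y)"
proof -
  assume y: "y \<in> U"
  let ?H = "matrix_inv (g y)"
  have "g y *v (?H *v axis m 1) = axis m 1"
    using inv_both[OF y] by (simp add: matrix_vector_mul_assoc)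
  then have "?H *v axis m 1 = (\<chi> k. det(\<chi> i j. if j=k then axis m 1 $ i else g y $ i $ j) / det (g y))"
    using cramer[OF detnz[OF y]] by blast
  then have "(?H *v axis m 1) $ k = det(\<chi> i j. if j=k then axis m 1 $ i else g y $ i $ j) / det (g y)"
    by simp
  moreover have "(?H *v axis m 1) $ k = ?H $ k $ m"
  proof -
    have "\<And>j. ?H $ k $ j * (if j = m then 1 else 0) = (if j = m then ?H $ k $ j else 0)" by simp
    then show ?thesis by (simp add: matrix_vector_mult_def axis_def)
  qed
  ultimately show ?thesis unfolding ginv_def by simp
qed

lemma det_sm: "(\<And>i j. smooth_on U (\<lambda>y. M y $ i $ j)) \<Longrightarrow> smooth_on U (\<lambda>y. det (M y :: real^'n^'n))"
  unfolding det_def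
  by (intro sm_sum[OF U] sm_mult[OF U] sm_const sm_prod[OF U]) auto

lemma ginv_diff: "y \<in> U \<Longrightarrow> (\<lambda>z. ginv g z k m) differentiable (at y)"
proof -
  assume y: "y \<in> U"
  have n: "smooth_on U (\<lambda>z. det (\<chi> i j. if j = k then axis m 1 $ i else g z $ i $ j))"
    by (rule det_sm) (auto intro: sm_if gsm)
  have d: "smooth_on U (\<lambda>z. det (g z))" by (rule det_sm) (rule gsm)
  have "(\<lambda>z. det (\<chi> i j. if j = k then axis m 1 $ i else g z $ i $ j) / det (g z)) differentiable (at y)"
    using sm_diffat[OF U n y] sm_diffat[OF U d y] detnz[OF y] by (rule differentiable_divide)
  then show ?thesis using diff_cong[OF U y] ginv_cramer by (metis (no_types, lifting))
qed

lemma dginv: assumes y: "y \<in> U"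
  shows "partial j (\<lambda>z. ginv g z k m) y = - (\<Sum>a\<in>UNIV. \<Sum>b\<in>UNIV.
     ginv g y k a * partial j (\<lambda>z. g z $ a $ b) y * ginv g y b m)"
proof -
  let ?H = "ginv g y" and ?dH = "\<lambda>a b. partial j (\<lambda>z. ginv g z a b) y"
    and ?dg = "\<lambda>a b. partial j (\<lambda>z. g z $ a $ b) y"
  have E: "(\<Sum>b\<in>UNIV. g y $ a $ b * ?dH b m) = - (\<Sum>b\<in>UNIV. ?dg a b * ?H b m)" for a
  proof -
    have "partial j (\<lambda>z. \<Sum>b\<in>UNIV. g z $ a $ b * ginv g z b m) y = partial j (\<lambda>z. if a = m then 1 else 0) y"
      by (rule partial_cong[OF U y]) (simp add: inv_r)
    also have "\<dots> = 0" by (rule partial_const)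
    finally have "0 = partial j (\<lambda>z. \<Sum>b\<in>UNIV. g z $ a $ b * ginv g z b m) y" by simp
    also have "\<dots> = (\<Sum>b\<in>UNIV. partial j (\<lambda>z. g z $ a $ b * ginv g z b m) y)"
      using gdiff[OF y] ginv_diff[OF y] by (intro partial_sum) auto
    also have "\<dots> = (\<Sum>b\<in>UNIV. ?dg a b * ?H b m + g y $ a $ b * ?dH b m)"
      using gdiff[OF y] ginv_diff[OF y] by (intro sum.cong refl partial_mult)
    finally show ?thesis by (simp add: sum.distrib eq_neg_iff_add_eq_0 add.commute)
  qed
  have "?dH k m = (\<Sum>b\<in>UNIV. (if k = b then 1 else 0) * ?dH b m)" by (rule delta_l[symmetric])
  also have "\<dots> = (\<Sum>b\<in>UNIV. (\<Sum>a\<in>UNIV. ?H k a * g y $ a $ b) * ?dH b m)"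
    using inv_l[OF y] by simp
  also have "\<dots> = (\<Sum>a\<in>UNIV. ?H k a * (\<Sum>b\<in>UNIV. g y $ a $ b * ?dH b m))"
    by (rule ssw[symmetric])
  also have "\<dots> = (\<Sum>a\<in>UNIV. ?H k a * (- (\<Sum>b\<in>UNIV. ?dg a b * ?H b m)))"
    using E by simp
  also have "\<dots> = - (\<Sum>a\<in>UNIV. \<Sum>b\<in>UNIV. ?H k a * ?dg a b * ?H b m)"
    by (simp add: sum_distrib_left sum_negf mult.assoc)
  finally show ?thesis .
qed

lemma chr_sym: assumes y: "y \<in> U" shows "christoffel g y k i j = christoffel g y k j i"
proof -
  have "\<And>l. partial l (\<lambda>z. g z $ i $ j) y = partial l (\<lambda>z. g z $ j $ i) y" using dgsym[OF y] by blast
  then show ?thesis unfolding christoffel_def by (simp add: algebra_simps)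
qed

lemma chr_low: assumes y: "y \<in> U"
  shows "(\<Sum>l\<in>UNIV. g y $ a $ l * christoffel g y l i j) = (1/2) *
     (partial i (\<lambda>z. g z $ j $ a) y + partial j (\<lambda>z. g z $ i $ a) y - partial a (\<lambda>z. g z $ i $ j) y)"
proof -
  let ?T = "\<lambda>l. partial i (\<lambda>y. g y $ j $ l) y + partial j (\<lambda>y. g y $ i $ l) y - partial l (\<lambda>y. g y $ i $ j) y"
  have "(\<Sum>l\<in>UNIV. g y $ a $ l * christoffel g y l i j) = (1/2) * (\<Sum>l\<in>UNIV. g y $ a $ l * (\<Sum>m\<in>UNIV. ginv g y l m * ?T m))"
    unfolding christoffel_def by (simp add: sum_distrib_left algebra_simps)
  also have "\<dots> = (1/2) * (\<Sum>m\<in>UNIV. (\<Sum>l\<in>UNIV. g y $ a $ l * ginv g y l m) * ?T m)"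
    by (simp only: ssw)
  also have "\<dots> = (1/2) * ?T a" using inv_r[OF y] by (simp add: delta_l)
  finally show ?thesis .
qed

lemma g_inj: assumes y: "y \<in> U"
  and h: "\<And>a. (\<Sum>b\<in>UNIV. g y $ a $ b * v b) = (\<Sum>b\<in>UNIV. g y $ a $ b * w b)"
  shows "v k = (w k :: real)"
proof -
  have "v k = (\<Sum>b\<in>UNIV. (if k = b then 1 else 0) * v b)" by (rule delta_l[symmetric])
  also have "\<dots> = (\<Sum>b\<in>UNIV. (\<Sum>a\<in>UNIV. ginv g y k a * g y $ a $ b) * v b)" using inv_l[OF y] by simp
  also have "\<dots> = (\<Sum>a\<in>UNIV. ginv g y k a * (\<Sum>b\<in>UNIV. g y $ a $ b * v b))" by (rule ssw[symmetric])
  also have "\<dots> = (\<Sum>a\<in>UNIV. ginv g y k a * (\<Sum>b\<in>UNIV. g y $ a $ b * w b))" using h by simp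
  also have "\<dots> = (\<Sum>b\<in>UNIV. (\<Sum>a\<in>UNIV. ginv g y k a * g y $ a $ b) * w b)" by (rule ssw)
  also have "\<dots> = w k" using inv_l[OF y] by (simp add: delta_l)
  finally show ?thesis .
qed

lemma vdiff: "smooth_vf_on U u \<Longrightarrow> y \<in> U \<Longrightarrow> (\<lambda>z. u z $ b) differentiable (at y)"
  unfolding smooth_vf_on_def using sm_diffat[OF U] by blast

lemma vsm: "smooth_vf_on U u \<Longrightarrow> smooth_on U (\<lambda>z. u z $ b)"
  unfolding smooth_vf_on_def by blast

lemma lower_sm: "smooth_vf_on U u \<Longrightarrow> smooth_on U (\<lambda>z. lower g u z a)"
  unfolding lower_def by (intro sm_sum[OF U] sm_mult[OF U] gsm vsm)

lemma lower_diff: "smooth_vf_on U u \<Longrightarrow> y \<in> U \<Longrightarrow> (\<lambda>z. lower g u z a) differentiable (at y)"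
  using lower_sm sm_diffat[OF U] by blast

lemma d_lower: assumes su: "smooth_vf_on U u" and y: "y \<in> U"
  shows "partial j (\<lambda>z. lower g u z a) y = (\<Sum>b\<in>UNIV. partial j (\<lambda>z. g z $ a $ b) y * u y $ b
             + g y $ a $ b * partial j (\<lambda>z. u z $ b) y)"
proof -
  have "partial j (\<lambda>z. lower g u z a) y = partial j (\<lambda>z. \<Sum>b\<in>UNIV. g z $ a $ b * u z $ b) y"
    unfolding lower_def ..
  also have "\<dots> = (\<Sum>b\<in>UNIV. partial j (\<lambda>z. g z $ a $ b * u z $ b) y)"
    using gdiff[OF y] vdiff[OF su y] by (intro partial_sum) (auto intro: differentiable_mult)
  also have "\<dots> = (\<Sum>b\<in>UNIV. partial j (\<lambda>z. g z $ a $ b) y * u y $ b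
             + g y $ a $ b * partial j (\<lambda>z. u z $ b) y)"
    using gdiff[OF y] vdiff[OF su y] by (intro sum.cong refl partial_mult)
  finally show ?thesis .
qed

lemma raise: assumes y: "y \<in> U" shows "(\<Sum>m\<in>UNIV. ginv g y k m * lower g u y m) = u y $ k"
proof -
  have "(\<Sum>m\<in>UNIV. ginv g y k m * lower g u y m) = (\<Sum>b\<in>UNIV. (\<Sum>m\<in>UNIV. ginv g y k m * g y $ m $ b) * u y $ b)"
    unfolding lower_def by (rule ssw)
  also have "\<dots> = u y $ k" using inv_l[OF y] by (simp add: delta_l)
  finally show ?thesis .
qed

lemma d_upper: assumes su: "smooth_vf_on U u" and y: "y \<in> U"
  shows "partial j (\<lambda>z. u z $ k) y = (\<Sum>m\<in>UNIV. ginv g y k m * cov_deriv g u y j m)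
            - (\<Sum>l\<in>UNIV. christoffel g y k j l * u y $ l)"
proof -
  let ?dg = "\<lambda>a b. partial j (\<lambda>z. g z $ a $ b) y"
  let ?du = "\<lambda>b. partial j (\<lambda>z. u z $ b) y"
  let ?R = "\<lambda>k. (\<Sum>m\<in>UNIV. ginv g y k m * cov_deriv g u y j m) - (\<Sum>l\<in>UNIV. christoffel g y k j l * u y $ l)"
  have "(\<Sum>b\<in>UNIV. g y $ a $ b * ?du b) = (\<Sum>b\<in>UNIV. g y $ a $ b * ?R b)" for a
  proof -
    have S1: "(\<Sum>b\<in>UNIV. g y $ a $ b * (\<Sum>m\<in>UNIV. ginv g y b m * cov_deriv g u y j m)) = cov_deriv g u y j a"
      by (simp only: ssw inv_r[OF y] delta_l)
    have S2: "(\<Sum>b\<in>UNIV. g y $ a $ b * (\<Sum>l\<in>UNIV. christoffel g y b j l * u y $ l))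
       = (\<Sum>l\<in>UNIV. (1/2) * (?dg l a + partial l (\<lambda>z. g z $ j $ a) y - partial a (\<lambda>z. g z $ j $ l) y) * u y $ l)"
      by (simp only: ssw chr_low[OF y])
    have S3: "(\<Sum>l\<in>UNIV. christoffel g y l j a * lower g u y l)
       = (\<Sum>b\<in>UNIV. (1/2) * (?dg a b + partial a (\<lambda>z. g z $ j $ b) y - partial b (\<lambda>z. g z $ j $ a) y) * u y $ b)"
    proof -
      have "(\<Sum>l\<in>UNIV. christoffel g y l j a * lower g u y l)
          = (\<Sum>b\<in>UNIV. (\<Sum>l\<in>UNIV. christoffel g y l j a * g y $ l $ b) * u y $ b)"
        unfolding lower_def by (rule ssw)
      also have "\<dots> = (\<Sum>b\<in>UNIV. (\<Sum>l\<in>UNIV. g y $ b $ l * christoffel g y l j a) * u y $ b)"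
        using gsym[OF y] by (simp add: mult.commute)
      also have "\<dots> = (\<Sum>b\<in>UNIV. (1/2) * (?dg a b + partial a (\<lambda>z. g z $ j $ b) y - partial b (\<lambda>z. g z $ j $ a) y) * u y $ b)"
        by (simp only: chr_low[OF y])
      finally show ?thesis .
    qed
    have C: "cov_deriv g u y j a = (\<Sum>b\<in>UNIV. ?dg a b * u y $ b + g y $ a $ b * ?du b)
        - (\<Sum>b\<in>UNIV. (1/2) * (?dg a b + partial a (\<lambda>z. g z $ j $ b) y - partial b (\<lambda>z. g z $ j $ a) y) * u y $ b)"
      unfolding cov_deriv_def S3[symmetric] d_lower[OF su y] ..
    have "(\<Sum>b\<in>UNIV. g y $ a $ b * ?R b) = cov_deriv g u y j a
       - (\<Sum>l\<in>UNIV. (1/2) * (?dg l a + partial l (\<lambda>z. g z $ j $ a) y - partial a (\<lambda>z. g z $ j $ l) y) * u y $ l)"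
      by (simp only: right_diff_distrib sum_subtractf S1 S2)
    also have "\<dots> = (\<Sum>b\<in>UNIV. ?dg a b * u y $ b + g y $ a $ b * ?du b
        - (1/2) * (?dg a b + partial a (\<lambda>z. g z $ j $ b) y - partial b (\<lambda>z. g z $ j $ a) y) * u y $ b
        - (1/2) * (?dg b a + partial b (\<lambda>z. g z $ j $ a) y - partial a (\<lambda>z. g z $ j $ b) y) * u y $ b)"
      unfolding C by (simp only: sum_subtractf)
    also have "\<dots> = (\<Sum>b\<in>UNIV. g y $ a $ b * ?du b)"
    proof (rule sum.cong[OF refl])
      fix b
      have "?dg b a = ?dg a b" by (rule dgsym[OF y])
      then show "?dg a b * u y $ b + g y $ a $ b * ?du b
        - (1/2) * (?dg a b + partial a (\<lambda>z. g z $ j $ b) y - partial b (\<lambda>z. g z $ j $ a) y) * u y $ b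
        - (1/2) * (?dg b a + partial b (\<lambda>z. g z $ j $ a) y - partial a (\<lambda>z. g z $ j $ b) y) * u y $ b
        = g y $ a $ b * ?du b" by (simp add: algebra_simps)
    qed
    finally show ?thesis by simp
  qed
  then show ?thesis by (rule g_inj[OF y, where v = ?du and w = ?R])
qed

definition Gv :: "real^'n \<Rightarrow> 'n \<Rightarrow> real" where
  "Gv y l = (\<Sum>k\<in>UNIV. christoffel g y k k l)"

lemma G_formula: assumes y: "y \<in> U"
  shows "Gv y l = (1/2) * (\<Sum>k\<in>UNIV. \<Sum>m\<in>UNIV. ginv g y k m * partial l (\<lambda>z. g z $ k $ m) y)"
proof -
  have sw: "(\<Sum>k\<in>UNIV. \<Sum>m\<in>UNIV. ginv g y k m * partial k (\<lambda>z. g z $ l $ m) y)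
     = (\<Sum>k\<in>UNIV. \<Sum>m\<in>UNIV. ginv g y k m * partial m (\<lambda>z. g z $ k $ l) y)"
  proof -
    have "(\<Sum>k\<in>UNIV. \<Sum>m\<in>UNIV. ginv g y k m * partial k (\<lambda>z. g z $ l $ m) y)
       = (\<Sum>m\<in>UNIV. \<Sum>k\<in>UNIV. ginv g y k m * partial k (\<lambda>z. g z $ l $ m) y)" by (rule sum.swap)
    also have "\<dots> = (\<Sum>m\<in>UNIV. \<Sum>k\<in>UNIV. ginv g y m k * partial k (\<lambda>z. g z $ m $ l) y)"
    proof (intro sum.cong refl)
      fix m k
      have "ginv g y k m = ginv g y m k" by (rule Hsym[OF y])
      moreover have "partial k (\<lambda>z. g z $ l $ m) y = partial k (\<lambda>z. g z $ m $ l) y" by (rule dgsym[OF y])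
      ultimately show "ginv g y k m * partial k (\<lambda>z. g z $ l $ m) y = ginv g y m k * partial k (\<lambda>z. g z $ m $ l) y"
        by simp
    qed
    finally show ?thesis .
  qed
  have "Gv y l = (1/2) * (\<Sum>k\<in>UNIV. \<Sum>m\<in>UNIV. ginv g y k m * partial k (\<lambda>z. g z $ l $ m) y
      + ginv g y k m * partial l (\<lambda>z. g z $ k $ m) y - ginv g y k m * partial m (\<lambda>z. g z $ k $ l) y)"
    unfolding Gv_def christoffel_def by (simp add: sum_distrib_left algebra_simps)
  also have "\<dots> = (1/2) * ((\<Sum>k\<in>UNIV. \<Sum>m\<in>UNIV. ginv g y k m * partial k (\<lambda>z. g z $ l $ m) y)
      + (\<Sum>k\<in>UNIV. \<Sum>m\<in>UNIV. ginv g y k m * partial l (\<lambda>z. g z $ k $ m) y)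
      - (\<Sum>k\<in>UNIV. \<Sum>m\<in>UNIV. ginv g y k m * partial m (\<lambda>z. g z $ k $ l) y))"
    by (simp only: sum.distrib sum_subtractf)
  also have "\<dots> = (1/2) * (\<Sum>k\<in>UNIV. \<Sum>m\<in>UNIV. ginv g y k m * partial l (\<lambda>z. g z $ k $ m) y)"
    unfolding sw by simp
  finally show ?thesis .
qed

lemma dg_diff: "y \<in> U \<Longrightarrow> partial l (\<lambda>z. g z $ k $ m) differentiable (at y)"
  using sm_diffat[OF U sm_partial[OF gsm]] by blast

lemma G_diff: assumes y: "y \<in> U" shows "(\<lambda>z. Gv z l) differentiable (at y)"
proof -
  have "(\<lambda>z. (1/2) * (\<Sum>k\<in>UNIV. \<Sum>m\<in>UNIV. ginv g z k m * partial l (\<lambda>z. g z $ k $ m) z)) differentiable (at y)"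
    using ginv_diff[OF y] dg_diff[OF y]
    by (intro differentiable_mult differentiable_const differentiable_sum) auto
  then show ?thesis using diff_cong[OF U y] G_formula by (metis (no_types, lifting))
qed

lemma dG: assumes y: "y \<in> U"
  shows "partial j (\<lambda>z. Gv z l) y = (1/2) * (\<Sum>k\<in>UNIV. \<Sum>m\<in>UNIV.
     partial j (\<lambda>z. ginv g z k m) y * partial l (\<lambda>z. g z $ k $ m) y
     + ginv g y k m * partial j (partial l (\<lambda>z. g z $ k $ m)) y)"
proof -
  have "partial j (\<lambda>z. Gv z l) y = partial j (\<lambda>z. (1/2) * (\<Sum>k\<in>UNIV. \<Sum>m\<in>UNIV. ginv g z k m * partial l (\<lambda>z. g z $ k $ m) z)) y"
    using G_formula by (intro partial_cong[OF U y]) auto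
  also have "\<dots> = (1/2) * partial j (\<lambda>z. \<Sum>k\<in>UNIV. \<Sum>m\<in>UNIV. ginv g z k m * partial l (\<lambda>z. g z $ k $ m) z) y"
    using ginv_diff[OF y] dg_diff[OF y]
    by (intro partial_cmult differentiable_sum differentiable_mult) auto
  also have "partial j (\<lambda>z. \<Sum>k\<in>UNIV. \<Sum>m\<in>UNIV. ginv g z k m * partial l (\<lambda>z. g z $ k $ m) z) y
     = (\<Sum>k\<in>UNIV. partial j (\<lambda>z. \<Sum>m\<in>UNIV. ginv g z k m * partial l (\<lambda>z. g z $ k $ m) z) y)"
    using ginv_diff[OF y] dg_diff[OF y]
    by (intro partial_sum differentiable_sum differentiable_mult) auto
  also have "\<dots> = (\<Sum>k\<in>UNIV. \<Sum>m\<in>UNIV. partial j (\<lambda>z. ginv g z k m * partial l (\<lambda>z. g z $ k $ m) z) y)"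
    using ginv_diff[OF y] dg_diff[OF y]
    by (intro sum.cong refl partial_sum differentiable_mult) auto
  also have "\<dots> = (\<Sum>k\<in>UNIV. \<Sum>m\<in>UNIV.
     partial j (\<lambda>z. ginv g z k m) y * partial l (\<lambda>z. g z $ k $ m) y
     + ginv g y k m * partial j (partial l (\<lambda>z. g z $ k $ m)) y)"
    using ginv_diff[OF y] dg_diff[OF y]
    by (intro sum.cong refl partial_mult) auto
  finally show ?thesis .
qed

lemma dG_sym: assumes y: "y \<in> U"
  shows "partial j (\<lambda>z. Gv z l) y = partial l (\<lambda>z. Gv z j) y"
proof -
  let ?H = "ginv g y" and ?D = "\<lambda>j a b. partial j (\<lambda>z. g z $ a $ b) y"
  have ss: "partial j (partial l (\<lambda>z. g z $ k $ m)) y = partial l (partial j (\<lambda>z. g z $ k $ m)) y" for k m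
    using schwarz_C2[OF U y sm_C2[OF gsm]] by blast
  have T: "(\<Sum>k\<in>UNIV. \<Sum>m\<in>UNIV. (\<Sum>a\<in>UNIV. \<Sum>b\<in>UNIV. ?H k a * ?D j a b * ?H b m) * ?D l k m)
       = (\<Sum>k\<in>UNIV. \<Sum>m\<in>UNIV. (\<Sum>a\<in>UNIV. \<Sum>b\<in>UNIV. ?H k a * ?D l a b * ?H b m) * ?D j k m)"
    by (rule trace_sym) (rule Hsym[OF y])
  have "partial j (\<lambda>z. Gv z l) y = (1/2) * ((\<Sum>k\<in>UNIV. \<Sum>m\<in>UNIV. - (\<Sum>a\<in>UNIV. \<Sum>b\<in>UNIV. ?H k a * ?D j a b * ?H b m) * ?D l k m)
     + (\<Sum>k\<in>UNIV. \<Sum>m\<in>UNIV. ?H k m * partial j (partial l (\<lambda>z. g z $ k $ m)) y))"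
    unfolding dG[OF y] dginv[OF y] by (simp only: sum.distrib)
  also have "\<dots> = (1/2) * ((\<Sum>k\<in>UNIV. \<Sum>m\<in>UNIV. - (\<Sum>a\<in>UNIV. \<Sum>b\<in>UNIV. ?H k a * ?D l a b * ?H b m) * ?D j k m)
     + (\<Sum>k\<in>UNIV. \<Sum>m\<in>UNIV. ?H k m * partial l (partial j (\<lambda>z. g z $ k $ m)) y))"
    using T ss by (simp add: sum_negf)
  also have "\<dots> = partial l (\<lambda>z. Gv z j) y"
    unfolding dG[OF y] dginv[OF y] by (simp only: sum.distrib)
  finally show ?thesis .
qed

end



context mst begin

lemma Hg: "y \<in> U \<Longrightarrow> (\<Sum>m\<in>UNIV. ginv g y k m * g y $ j $ m) = (if k = j then 1 else 0)"
  using inv_l[of y k j] gsym[of y] by simp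

lemma torse_dup: assumes sv: "smooth_vf_on U v" and y: "y \<in> U"
  and cv: "\<And>i j. cov_deriv g v y i j = \<psi> * (lower g v y i * lower g v y j + g y $ i $ j)"
  shows "partial j (\<lambda>z. v z $ k) y = \<psi> * (lower g v y j * v y $ k + (if k = j then 1 else 0))
     - (\<Sum>l\<in>UNIV. christoffel g y k j l * v y $ l)"
proof -
  have "(\<Sum>m\<in>UNIV. ginv g y k m * cov_deriv g v y j m)
      = (\<Sum>m\<in>UNIV. \<psi> * lower g v y j * (ginv g y k m * lower g v y m) + \<psi> * (ginv g y k m * g y $ j $ m))"
    unfolding cv by (simp add: algebra_simps)
  also have "\<dots> = \<psi> * lower g v y j * (\<Sum>m\<in>UNIV. ginv g y k m * lower g v y m) + \<psi> * (\<Sum>m\<in>UNIV. ginv g y k m * g y $ j $ m)"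
    by (simp only: sum.distrib sum_distrib_left)
  also have "\<dots> = \<psi> * (lower g v y j * v y $ k + (if k = j then 1 else 0))"
    using raise[OF y] Hg[OF y] by (simp add: algebra_simps)
  finally show ?thesis using d_upper[OF sv y] by simp
qed

lemma gprod_sym: assumes y: "y \<in> U" shows "gprod g v w y = gprod g w v y"
proof -
  have "gprod g v w y = (\<Sum>k\<in>UNIV. v y $ k * (\<Sum>j\<in>UNIV. g y $ k $ j * w y $ j))"
    unfolding gprod_def lower_def ..
  also have "\<dots> = (\<Sum>j\<in>UNIV. (\<Sum>k\<in>UNIV. v y $ k * g y $ k $ j) * w y $ j)" by (rule ssw)
  also have "\<dots> = (\<Sum>j\<in>UNIV. w y $ j * (\<Sum>k\<in>UNIV. g y $ j $ k * v y $ k))"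
    using gsym[OF y] by (simp add: mult.commute)
  also have "\<dots> = gprod g w v y" unfolding gprod_def lower_def ..
  finally show ?thesis .
qed

lemma sumG: "(\<Sum>k\<in>UNIV. \<Sum>l\<in>UNIV. christoffel g y k k l * v y $ l) = (\<Sum>l\<in>UNIV. Gv y l * v y $ l)"
  unfolding Gv_def sum_distrib_right by (rule sum.swap)

lemma torse_div: assumes sv: "smooth_vf_on U v" and y: "y \<in> U"
  and cv: "\<And>i j. cov_deriv g v y i j = \<psi> * (lower g v y i * lower g v y j + g y $ i $ j)"
  and vv: "gprod g v v y = -1"
  shows "(\<Sum>k\<in>UNIV. partial k (\<lambda>z. v z $ k) y) + (\<Sum>l\<in>UNIV. Gv y l * v y $ l) = (real CARD('n) - 1) * \<psi>"
proof -
  have "(\<Sum>k\<in>UNIV. partial k (\<lambda>z. v z $ k) y) = (\<Sum>k\<in>UNIV. \<psi> * (lower g v y k * v y $ k) + \<psi>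
     - (\<Sum>l\<in>UNIV. christoffel g y k k l * v y $ l))"
    by (rule sum.cong[OF refl]) (simp add: torse_dup[OF sv y cv] algebra_simps)
  also have "\<dots> = \<psi> * (\<Sum>k\<in>UNIV. v y $ k * lower g v y k) + real CARD('n) * \<psi> - (\<Sum>l\<in>UNIV. Gv y l * v y $ l)"
  proof -
    have "(\<Sum>k\<in>UNIV. \<psi> * (lower g v y k * v y $ k) + \<psi> - (\<Sum>l\<in>UNIV. christoffel g y k k l * v y $ l))
      = \<psi> * (\<Sum>k\<in>UNIV. lower g v y k * v y $ k) + (\<Sum>k\<in>(UNIV::'n set). \<psi>) - (\<Sum>k\<in>UNIV. \<Sum>l\<in>UNIV. christoffel g y k k l * v y $ l)"
      by (simp only: sum.distrib sum_subtractf sum_distrib_left)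
    moreover have "(\<Sum>k\<in>UNIV. lower g v y k * v y $ k) = (\<Sum>k\<in>UNIV. v y $ k * lower g v y k)"
      by (simp add: mult.commute)
    ultimately show ?thesis unfolding sumG by simp
  qed
  also have "\<dots> = (real CARD('n) - 1) * \<psi> - (\<Sum>l\<in>UNIV. Gv y l * v y $ l)"
    using vv unfolding gprod_def by (simp add: algebra_simps)
  finally show ?thesis by simp
qed

lemma torse_dsym: assumes sv: "smooth_vf_on U v" and y: "y \<in> U"
  and cv: "\<And>i j. cov_deriv g v y i j = \<psi> * (lower g v y i * lower g v y j + g y $ i $ j)"
  shows "partial j (\<lambda>z. lower g v z i) y = partial i (\<lambda>z. lower g v z j) y"
proof -
  have e: "partial j (\<lambda>z. lower g v z i) y = cov_deriv g v y j i + (\<Sum>k\<in>UNIV. christoffel g y k j i * lower g v y k)" for i j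
    unfolding cov_deriv_def by simp
  show ?thesis unfolding e cv using gsym[OF y, of i j] chr_sym[OF y]
    by (simp add: mult.commute)
qed

lemma dc_gen: assumes su: "smooth_vf_on U u" and sw: "smooth_vf_on U w" and y: "y \<in> U"
  shows "partial i (\<lambda>z. gprod g u w z) y = (\<Sum>m\<in>UNIV. cov_deriv g u y i m * w y $ m)
     + (\<Sum>k\<in>UNIV. u y $ k * cov_deriv g w y i k)"
proof -
  let ?W = "\<lambda>k. lower g w y k" and ?\<Gamma> = "christoffel g y"
  have "partial i (\<lambda>z. gprod g u w z) y = (\<Sum>k\<in>UNIV. partial i (\<lambda>z. u z $ k * lower g w z k) y)"
    unfolding gprod_def using vdiff[OF su y] lower_diff[OF sw y]
    by (intro partial_sum) (auto intro: differentiable_mult)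
  also have "\<dots> = (\<Sum>k\<in>UNIV. partial i (\<lambda>z. u z $ k) y * ?W k + u y $ k * partial i (\<lambda>z. lower g w z k) y)"
    using vdiff[OF su y] lower_diff[OF sw y] by (intro sum.cong refl partial_mult)
  also have "\<dots> = (\<Sum>k\<in>UNIV. ((\<Sum>m\<in>UNIV. ginv g y k m * cov_deriv g u y i m) - (\<Sum>l\<in>UNIV. ?\<Gamma> k i l * u y $ l)) * ?W k
        + u y $ k * (cov_deriv g w y i k + (\<Sum>l\<in>UNIV. ?\<Gamma> l i k * ?W l)))"
    unfolding d_upper[OF su y] cov_deriv_def by simp
  also have "\<dots> = (\<Sum>k\<in>UNIV. (\<Sum>m\<in>UNIV. ginv g y k m * cov_deriv g u y i m) * ?W k)
      - (\<Sum>k\<in>UNIV. (\<Sum>l\<in>UNIV. ?\<Gamma> k i l * u y $ l) * ?W k)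
      + (\<Sum>k\<in>UNIV. u y $ k * cov_deriv g w y i k) + (\<Sum>k\<in>UNIV. u y $ k * (\<Sum>l\<in>UNIV. ?\<Gamma> l i k * ?W l))"
    by (simp add: sum.distrib sum_subtractf algebra_simps)
  also have "(\<Sum>k\<in>UNIV. (\<Sum>m\<in>UNIV. ginv g y k m * cov_deriv g u y i m) * ?W k) = (\<Sum>m\<in>UNIV. cov_deriv g u y i m * w y $ m)"
  proof -
    have "(\<Sum>k\<in>UNIV. (\<Sum>m\<in>UNIV. ginv g y k m * cov_deriv g u y i m) * ?W k)
        = (\<Sum>k\<in>UNIV. \<Sum>m\<in>UNIV. cov_deriv g u y i m * (ginv g y m k * ?W k))"
    proof (rule sum.cong[OF refl])
      fix k
      show "(\<Sum>m\<in>UNIV. ginv g y k m * cov_deriv g u y i m) * ?W k = (\<Sum>m\<in>UNIV. cov_deriv g u y i m * (ginv g y m k * ?W k))"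
        unfolding sum_distrib_right by (rule sum.cong[OF refl]) (simp add: Hsym[OF y, of k] mult_ac)
    qed
    also have "\<dots> = (\<Sum>m\<in>UNIV. cov_deriv g u y i m * (\<Sum>k\<in>UNIV. ginv g y m k * ?W k))"
      by (subst sum.swap) (simp add: sum_distrib_left)
    also have "\<dots> = (\<Sum>m\<in>UNIV. cov_deriv g u y i m * w y $ m)" using raise[OF y] by simp
    finally show ?thesis .
  qed
  also have "(\<Sum>k\<in>UNIV. u y $ k * (\<Sum>l\<in>UNIV. ?\<Gamma> l i k * ?W l)) = (\<Sum>k\<in>UNIV. (\<Sum>l\<in>UNIV. ?\<Gamma> k i l * u y $ l) * ?W k)"
  proof -
    have "(\<Sum>k\<in>UNIV. u y $ k * (\<Sum>l\<in>UNIV. ?\<Gamma> l i k * ?W l)) = (\<Sum>k\<in>UNIV. \<Sum>l\<in>UNIV. u y $ k * ?\<Gamma> l i k * ?W l)"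
      by (simp add: sum_distrib_left mult.assoc)
    also have "\<dots> = (\<Sum>l\<in>UNIV. \<Sum>k\<in>UNIV. u y $ k * ?\<Gamma> l i k * ?W l)" by (rule sum.swap)
    also have "\<dots> = (\<Sum>k\<in>UNIV. (\<Sum>l\<in>UNIV. ?\<Gamma> k i l * u y $ l) * ?W k)"
      by (rule sum.cong[OF refl], simp add: sum_distrib_left mult_ac)
    finally show ?thesis .
  qed
  finally show ?thesis by simp
qed

end



lemma final_alg:
  fixes uu ww UU WW a b P :: "real^'n::finite" and c ph lm N :: real
  assumes h1: "uu \<bullet> UU = -1" and h2: "ww \<bullet> WW = -1" and h3: "uu \<bullet> WW = c" and h4: "ww \<bullet> UU = c"
    and hb: "b = (- (uu \<bullet> b)) *\<^sub>R UU"
    and hP: "P = (ph*c + lm) *\<^sub>R UU + (ph + lm*c) *\<^sub>R WW"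
    and E1: "\<And>i j. b$j*(c*UU$i + WW$i) + ph*P$j*UU$i + a$j*(c*WW$i + UU$i) + lm*P$j*WW$i
                 = b$i*(c*UU$j + WW$j) + ph*P$i*UU$j + a$i*(c*WW$j + UU$j) + lm*P$i*WW$j"
    and E2: "ww \<bullet> (c *\<^sub>R a + lm *\<^sub>R P - b) + (lm*c - ph)*(N-1)*lm + uu \<bullet> (a - c *\<^sub>R b - ph *\<^sub>R P)
              + (lm - ph*c)*(N-1)*ph = (N-1)*(uu \<bullet> a - ww \<bullet> b)"
    and hc: "c\<^sup>2 \<noteq> 1" and hN: "N \<noteq> 2"
  shows "a = (- (ww \<bullet> a)) *\<^sub>R WW"
proof -
  define p where "p = uu \<bullet> b"
  define Aw where "Aw = ww \<bullet> a"
  define Au where "Au = uu \<bullet> a"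
  have wP: "ww \<bullet> P = ph * (c\<^sup>2 - 1)" unfolding hP using h2 h4
    by (simp add: inner_add_right power2_eq_square algebra_simps)
  have uP: "uu \<bullet> P = lm * (c\<^sup>2 - 1)" unfolding hP using h1 h3
    by (simp add: inner_add_right power2_eq_square algebra_simps)
  have wb: "ww \<bullet> b = - p * c" unfolding p_def by (subst hb) (simp add: h4)
  have ub: "uu \<bullet> b = p" unfolding p_def ..
  have V: "(c*UU$i + WW$i) *\<^sub>R b + (ph*UU$i) *\<^sub>R P + (c*WW$i + UU$i) *\<^sub>R a + (lm*WW$i) *\<^sub>R P
      = b$i *\<^sub>R (c *\<^sub>R UU + WW) + (ph*P$i) *\<^sub>R UU + a$i *\<^sub>R (c *\<^sub>R WW + UU) + (lm*P$i) *\<^sub>R WW" for i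
    using E1[of i] by (simp add: vec_eq_iff algebra_simps)
  have Ew: "(c*UU$i + WW$i) * (-p*c) + (ph*UU$i) * (ph * (c\<^sup>2 - 1)) + (c*WW$i + UU$i) * Aw + (lm*WW$i) * (ph * (c\<^sup>2 - 1))
      = b$i * (c*c - 1) + (ph*P$i) * c + (lm*P$i) * (-1)" for i
  proof -
    have "ww \<bullet> ((c*UU$i + WW$i) *\<^sub>R b + (ph*UU$i) *\<^sub>R P + (c*WW$i + UU$i) *\<^sub>R a + (lm*WW$i) *\<^sub>R P)
      = ww \<bullet> (b$i *\<^sub>R (c *\<^sub>R UU + WW) + (ph*P$i) *\<^sub>R UU + a$i *\<^sub>R (c *\<^sub>R WW + UU) + (lm*P$i) *\<^sub>R WW)"
      using V[of i] by simp
    then show ?thesis using h2 h4 wP wb unfolding Aw_def by (simp add: inner_add_right algebra_simps)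
  qed
  have Ewv: "(-p*c) *\<^sub>R (c *\<^sub>R UU + WW) + (ph * (ph * (c\<^sup>2 - 1))) *\<^sub>R UU + Aw *\<^sub>R (c *\<^sub>R WW + UU) + (lm * (ph * (c\<^sup>2 - 1))) *\<^sub>R WW
      = (c*c - 1) *\<^sub>R b + (ph*c) *\<^sub>R P - lm *\<^sub>R P"
    using Ew by (simp add: vec_eq_iff algebra_simps)
  have "uu \<bullet> ((-p*c) *\<^sub>R (c *\<^sub>R UU + WW) + (ph * (ph * (c\<^sup>2 - 1))) *\<^sub>R UU + Aw *\<^sub>R (c *\<^sub>R WW + UU) + (lm * (ph * (c\<^sup>2 - 1))) *\<^sub>R WW)
      = uu \<bullet> ((c*c - 1) *\<^sub>R b + (ph*c) *\<^sub>R P - lm *\<^sub>R P)" using Ewv by simp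
  then have "(-p*c) * (c * (-1) + c) + (ph * (ph * (c\<^sup>2 - 1))) * (-1) + Aw * (c * c + (-1)) + (lm * (ph * (c\<^sup>2 - 1))) * c
      = (c*c - 1) * p + (ph*c) * (lm * (c\<^sup>2 - 1)) - lm * (lm * (c\<^sup>2 - 1))"
    using h1 h3 uP ub by (simp add: inner_add_right inner_diff_right)
  then have "(c\<^sup>2 - 1) * Aw = (c\<^sup>2 - 1) * (p + ph\<^sup>2 - lm\<^sup>2)" by (simp add: power2_eq_square algebra_simps)
  moreover have "c\<^sup>2 - 1 \<noteq> 0" using hc by simp
  ultimately have Awv: "Aw = p + ph\<^sup>2 - lm\<^sup>2" by simp
  have "ww \<bullet> (c *\<^sub>R a + lm *\<^sub>R P - b) = c * Aw + lm * (ph * (c\<^sup>2 - 1)) + p * c"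
    using wP wb unfolding Aw_def by (simp add: inner_add_right inner_diff_right)
  moreover have "uu \<bullet> (a - c *\<^sub>R b - ph *\<^sub>R P) = Au - c * p - ph * (lm * (c\<^sup>2 - 1))"
    using uP ub unfolding Au_def by (simp add: inner_add_right inner_diff_right)
  ultimately have "c * Aw + lm * (ph * (c\<^sup>2 - 1)) + p * c + (lm*c - ph)*(N-1)*lm + (Au - c * p - ph * (lm * (c\<^sup>2 - 1)))
              + (lm - ph*c)*(N-1)*ph = (N-1)*(Au + p * c)"
    using E2 wb unfolding Au_def by simp
  then have "(N - 2) * Au = (N - 2) * (- c * Aw)" unfolding Awv by (simp add: power2_eq_square algebra_simps)
  moreover have "N - 2 \<noteq> 0" using hN by simp
  ultimately have Auv: "Au = - c * Aw" by (metis mult_left_cancel)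
  have Eu: "(c*UU$i + WW$i) * p + (ph*UU$i) * (lm * (c\<^sup>2 - 1)) + (c*WW$i + UU$i) * Au + (lm*WW$i) * (lm * (c\<^sup>2 - 1))
      = (ph*P$i) * (-1) + a$i * (c * c - 1) + (lm*P$i) * c" for i
  proof -
    have "uu \<bullet> ((c*UU$i + WW$i) *\<^sub>R b + (ph*UU$i) *\<^sub>R P + (c*WW$i + UU$i) *\<^sub>R a + (lm*WW$i) *\<^sub>R P)
      = uu \<bullet> (b$i *\<^sub>R (c *\<^sub>R UU + WW) + (ph*P$i) *\<^sub>R UU + a$i *\<^sub>R (c *\<^sub>R WW + UU) + (lm*P$i) *\<^sub>R WW)"
      using V[of i] by simp
    then show ?thesis using h1 h3 uP ub unfolding Au_def by (simp add: inner_add_right algebra_simps)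
  qed
  have "a$i = (- Aw) * WW$i" for i
  proof -
    have Pi: "P$i = (ph*c + lm) * UU$i + (ph + lm*c) * WW$i" unfolding hP by simp
    have "a$i * (c\<^sup>2 - 1) = (- Aw) * WW$i * (c\<^sup>2 - 1)"
      using Eu[of i] unfolding Pi Auv Awv by (simp add: power2_eq_square algebra_simps)
    then show ?thesis using \<open>c\<^sup>2 - 1 \<noteq> 0\<close> mult_right_cancel by blast
  qed
  then show ?thesis unfolding Aw_def by (simp add: vec_eq_iff)
qed




lemma core_alg:
  fixes uu ww G :: "'n::finite \<Rightarrow> real" and du dw dG :: "'n \<Rightarrow> 'n \<Rightarrow> real" and ddu ddw :: "'n \<Rightarrow> 'n \<Rightarrow> 'n \<Rightarrow> real"
  assumes su: "\<And>k j l. ddu k j l = ddu j k l" and sw: "\<And>k j l. ddw k j l = ddw j k l"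
    and sG: "\<And>j l. dG j l = dG l j"
  shows "(\<Sum>k\<in>UNIV. \<Sum>j\<in>UNIV. du k j * dw j k + uu j * ddw k j k - (dw k j * du j k + ww j * ddu k j k))
     + (\<Sum>l\<in>UNIV. G l * (\<Sum>j\<in>UNIV. uu j * dw j l - ww j * du j l))
   = (\<Sum>j\<in>UNIV. uu j * ((\<Sum>k\<in>UNIV. ddw j k k) + (\<Sum>l\<in>UNIV. dG j l * ww l + G l * dw j l)))
     - (\<Sum>j\<in>UNIV. ww j * ((\<Sum>k\<in>UNIV. ddu j k k) + (\<Sum>l\<in>UNIV. dG j l * uu l + G l * du j l)))"
proof -
  have i: "(\<Sum>k\<in>UNIV. \<Sum>j\<in>UNIV. du k j * dw j k) = (\<Sum>k\<in>UNIV. \<Sum>j\<in>UNIV. dw k j * du j k)"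
    by (subst sum.swap) (simp add: mult.commute)
  have ii: "(\<Sum>k\<in>UNIV. \<Sum>j\<in>UNIV. uu j * ddw k j k) = (\<Sum>j\<in>UNIV. uu j * (\<Sum>k\<in>UNIV. ddw j k k))"
    by (subst sum.swap) (simp add: sum_distrib_left sw)
  have iii: "(\<Sum>k\<in>UNIV. \<Sum>j\<in>UNIV. ww j * ddu k j k) = (\<Sum>j\<in>UNIV. ww j * (\<Sum>k\<in>UNIV. ddu j k k))"
    by (subst sum.swap) (simp add: sum_distrib_left su)
  have iv: "(\<Sum>l\<in>UNIV. G l * (\<Sum>j\<in>UNIV. uu j * dw j l - ww j * du j l))
     = (\<Sum>j\<in>UNIV. uu j * (\<Sum>l\<in>UNIV. G l * dw j l)) - (\<Sum>j\<in>UNIV. ww j * (\<Sum>l\<in>UNIV. G l * du j l))"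
  proof -
    have "(\<Sum>l\<in>UNIV. G l * (\<Sum>j\<in>UNIV. uu j * dw j l - ww j * du j l))
        = (\<Sum>l\<in>UNIV. \<Sum>j\<in>UNIV. G l * (uu j * dw j l - ww j * du j l))"
      by (simp only: sum_distrib_left)
    also have "\<dots> = (\<Sum>j\<in>UNIV. \<Sum>l\<in>UNIV. G l * (uu j * dw j l - ww j * du j l))"
      by (rule sum.swap)
    also have "\<dots> = (\<Sum>j\<in>UNIV. uu j * (\<Sum>l\<in>UNIV. G l * dw j l) - ww j * (\<Sum>l\<in>UNIV. G l * du j l))"
    proof (rule sum.cong[OF refl])
      fix j
      have "(\<Sum>l\<in>UNIV. G l * (uu j * dw j l - ww j * du j l))
          = (\<Sum>l\<in>UNIV. uu j * (G l * dw j l) - ww j * (G l * du j l))"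
        by (rule sum.cong) (simp_all add: algebra_simps)
      also have "\<dots> = uu j * (\<Sum>l\<in>UNIV. G l * dw j l) - ww j * (\<Sum>l\<in>UNIV. G l * du j l)"
        by (simp only: sum_subtractf sum_distrib_left)
      finally show "(\<Sum>l\<in>UNIV. G l * (uu j * dw j l - ww j * du j l))
          = uu j * (\<Sum>l\<in>UNIV. G l * dw j l) - ww j * (\<Sum>l\<in>UNIV. G l * du j l)" .
    qed
    also have "\<dots> = (\<Sum>j\<in>UNIV. uu j * (\<Sum>l\<in>UNIV. G l * dw j l)) - (\<Sum>j\<in>UNIV. ww j * (\<Sum>l\<in>UNIV. G l * du j l))"
      by (rule sum_subtractf)
    finally show ?thesis .
  qed
  have v: "(\<Sum>j\<in>UNIV. uu j * (\<Sum>l\<in>UNIV. dG j l * ww l)) = (\<Sum>j\<in>UNIV. ww j * (\<Sum>l\<in>UNIV. dG j l * uu l))"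
  proof -
    have "(\<Sum>j\<in>UNIV. uu j * (\<Sum>l\<in>UNIV. dG j l * ww l)) = (\<Sum>j\<in>UNIV. \<Sum>l\<in>UNIV. uu j * (dG j l * ww l))"
      by (simp only: sum_distrib_left)
    also have "\<dots> = (\<Sum>l\<in>UNIV. \<Sum>j\<in>UNIV. uu j * (dG j l * ww l))" by (rule sum.swap)
    also have "\<dots> = (\<Sum>l\<in>UNIV. \<Sum>j\<in>UNIV. ww l * (dG l j * uu j))"
    proof (intro sum.cong refl)
      fix l j
      show "uu j * (dG j l * ww l) = ww l * (dG l j * uu j)" using sG[of j l] by (simp add: mult_ac)
    qed
    also have "\<dots> = (\<Sum>l\<in>UNIV. ww l * (\<Sum>j\<in>UNIV. dG l j * uu j))"
      by (simp only: sum_distrib_left)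
    finally show ?thesis .
  qed
  have L: "(\<Sum>k\<in>UNIV. \<Sum>j\<in>UNIV. du k j * dw j k + uu j * ddw k j k - (dw k j * du j k + ww j * ddu k j k))
     = (\<Sum>k\<in>UNIV. \<Sum>j\<in>UNIV. du k j * dw j k) + (\<Sum>k\<in>UNIV. \<Sum>j\<in>UNIV. uu j * ddw k j k)
       - (\<Sum>k\<in>UNIV. \<Sum>j\<in>UNIV. dw k j * du j k) - (\<Sum>k\<in>UNIV. \<Sum>j\<in>UNIV. ww j * ddu k j k)"
    by (simp add: sum.distrib sum_subtractf)
  have R: "(\<Sum>j\<in>UNIV. uu j * ((\<Sum>k\<in>UNIV. ddw j k k) + (\<Sum>l\<in>UNIV. dG j l * ww l + G l * dw j l)))
     - (\<Sum>j\<in>UNIV. ww j * ((\<Sum>k\<in>UNIV. ddu j k k) + (\<Sum>l\<in>UNIV. dG j l * uu l + G l * du j l)))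
     = (\<Sum>j\<in>UNIV. uu j * (\<Sum>k\<in>UNIV. ddw j k k)) + (\<Sum>j\<in>UNIV. uu j * (\<Sum>l\<in>UNIV. dG j l * ww l))
       + (\<Sum>j\<in>UNIV. uu j * (\<Sum>l\<in>UNIV. G l * dw j l))
       - (\<Sum>j\<in>UNIV. ww j * (\<Sum>k\<in>UNIV. ddu j k k)) - (\<Sum>j\<in>UNIV. ww j * (\<Sum>l\<in>UNIV. dG j l * uu l))
       - (\<Sum>j\<in>UNIV. ww j * (\<Sum>l\<in>UNIV. G l * du j l))"
    by (simp add: sum.distrib distrib_left)
  show ?thesis unfolding L R iv using i ii iii v by linarith
qed




lemma pm3: assumes "A differentiable (at x)" "B differentiable (at x)" "C differentiable (at x)" "D differentiable (at x)"
  shows "partial j (\<lambda>z. A z * (B z * C z + D z)) x = partial j A x * (B x * C x + D x)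
          + A x * (partial j B x * C x + B x * partial j C x + partial j D x)"
proof -
  have d1: "(\<lambda>z. B z * C z) differentiable (at x)" using assms by (intro differentiable_mult)
  have d2: "(\<lambda>z. B z * C z + D z) differentiable (at x)" using d1 assms by (intro differentiable_add)
  have "partial j (\<lambda>z. A z * (B z * C z + D z)) x = partial j A x * (B x * C x + D x) + A x * partial j (\<lambda>z. B z * C z + D z) x"
    by (rule partial_mult[OF assms(1) d2])
  also have "partial j (\<lambda>z. B z * C z + D z) x = partial j (\<lambda>z. B z * C z) x + partial j D x"
    by (rule partial_add[OF d1 assms(4)])
  also have "partial j (\<lambda>z. B z * C z) x = partial j B x * C x + B x * partial j C x"
    by (rule partial_mult[OF assms(2,3)])
  finally show ?thesis by simp
qed

lemma inner_chi: "(v::real^'n::finite) \<bullet> (\<chi> i. f i) = (\<Sum>k\<in>UNIV. v $ k * f k)"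
  by (simp add: inner_vec_def)

lemma pBf: assumes "A differentiable (at x)" "B differentiable (at x)" "C differentiable (at x)"
    "E differentiable (at x)" "F differentiable (at x)"
  shows "partial k (\<lambda>y. (A y * B y - C y) * E y + (A y - C y * B y) * F y) x
    = (partial k A x * B x + A x * partial k B x - partial k C x) * E x + (A x * B x - C x) * partial k E x
      + (partial k A x - (partial k C x * B x + C x * partial k B x)) * F x + (A x - C x * B x) * partial k F x"
proof -
  have d1: "(\<lambda>y. A y * B y - C y) differentiable (at x)" using assms by (intro differentiable_diff differentiable_mult)
  have d2: "(\<lambda>y. A y - C y * B y) differentiable (at x)" using assms by (intro differentiable_diff differentiable_mult)
  have "partial k (\<lambda>y. (A y * B y - C y) * E y + (A y - C y * B y) * F y) x
     = partial k (\<lambda>y. (A y * B y - C y) * E y) x + partial k (\<lambda>y. (A y - C y * B y) * F y) x"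
    using d1 d2 assms by (intro partial_add differentiable_mult)
  also have "partial k (\<lambda>y. (A y * B y - C y) * E y) x = partial k (\<lambda>y. A y * B y - C y) x * E x + (A x * B x - C x) * partial k E x"
    using d1 assms by (intro partial_mult)
  also have "partial k (\<lambda>y. A y * B y - C y) x = partial k (\<lambda>y. A y * B y) x - partial k C x"
    using assms by (intro partial_diff differentiable_mult)
  also have "partial k (\<lambda>y. A y * B y) x = partial k A x * B x + A x * partial k B x"
    using assms by (intro partial_mult)
  also have "partial k (\<lambda>y. (A y - C y * B y) * F y) x = partial k (\<lambda>y. A y - C y * B y) x * F x + (A x - C x * B x) * partial k F x"
    using d2 assms by (intro partial_mult)
  also have "partial k (\<lambda>y. A y - C y * B y) x = partial k A x - partial k (\<lambda>y. C y * B y) x"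
    using assms by (intro partial_diff differentiable_mult)
  also have "partial k (\<lambda>y. C y * B y) x = partial k C x * B x + C x * partial k B x"
    using assms by (intro partial_mult)
  finally show ?thesis by (simp add: add.assoc)
qed

context mst begin

lemma step_dc: assumes su: "smooth_vf_on U u" and sw: "smooth_vf_on U w" and y: "y \<in> U"
  and du: "\<And>i j. cov_deriv g u y i j = phi * (lower g u y i * lower g u y j + g y $ i $ j)"
  and dw: "\<And>i j. cov_deriv g w y i j = lam * (lower g w y i * lower g w y j + g y $ i $ j)"
  shows "partial i (\<lambda>z. gprod g u w z) y = phi * (gprod g u w y * lower g u y i + lower g w y i)
      + lam * (gprod g u w y * lower g w y i + lower g u y i)"
proof -
  have a: "(\<Sum>m\<in>UNIV. cov_deriv g u y i m * w y $ m) = phi * (lower g u y i * (\<Sum>m\<in>UNIV. w y $ m * lower g u y m)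
      + (\<Sum>m\<in>UNIV. g y $ i $ m * w y $ m))"
    unfolding du by (simp add: sum_distrib_left sum.distrib algebra_simps)
  have b: "(\<Sum>k\<in>UNIV. u y $ k * cov_deriv g w y i k) = lam * (lower g w y i * (\<Sum>k\<in>UNIV. u y $ k * lower g w y k)
      + (\<Sum>k\<in>UNIV. g y $ i $ k * u y $ k))"
    unfolding dw by (simp add: sum_distrib_left sum.distrib algebra_simps)
  have c1: "(\<Sum>m\<in>UNIV. w y $ m * lower g u y m) = gprod g u w y"
    using gprod_sym[OF y, of w u] unfolding gprod_def by simp
  have c2: "(\<Sum>m\<in>UNIV. g y $ i $ m * w y $ m) = lower g w y i" "(\<Sum>k\<in>UNIV. g y $ i $ k * u y $ k) = lower g u y i"
    unfolding lower_def by simp_all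
  have c3: "(\<Sum>k\<in>UNIV. u y $ k * lower g w y k) = gprod g u w y" unfolding gprod_def ..
  show ?thesis unfolding dc_gen[OF su sw y] a b c1 c2 c3 by (simp add: algebra_simps)
qed

lemma main_at:
  assumes dim: "CARD('n) > 3"
    and su: "smooth_vf_on U u" and sw: "smooth_vf_on U w"
    and sphi: "smooth_on U phi" and slam: "smooth_on U lam"
    and uu: "\<forall>x\<in>U. gprod g u u x = -1"
    and ww: "\<forall>x\<in>U. gprod g w w x = -1"
    and uw: "\<forall>x\<in>U. (gprod g u w x)\<^sup>2 \<noteq> 1"
    and du: "\<forall>x\<in>U. \<forall>i j. cov_deriv g u x i j
               = phi x * (lower g u x i * lower g u x j + g x $ i $ j)"
    and dw: "\<forall>x\<in>U. \<forall>i j. cov_deriv g w x i j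
               = lam x * (lower g w x i * lower g w x j + g x $ i $ j)"
    and dphi: "\<forall>x\<in>U. \<forall>i. partial i phi x
               = - lower g u x i * (\<Sum>k\<in>UNIV. u x $ k * partial k phi x)"
    and x: "x \<in> U"
  shows "partial i lam x = - lower g w x i * (\<Sum>k\<in>UNIV. w x $ k * partial k lam x)"
proof -
  define N where "N = real CARD('n)"
  define c where "c = gprod g u w x"
  define a where "a = (\<lambda>i. partial i lam x)"
  define b where "b = (\<lambda>i. partial i phi x)"
  define P where "P = (\<lambda>i. partial i (\<lambda>z. gprod g u w z) x)"
  define UL where "UL = (\<lambda>i. lower g u x i)"
  define WL where "WL = (\<lambda>i. lower g w x i)"
  have du': "\<And>y i j. y \<in> U \<Longrightarrow> cov_deriv g u y i j = phi y * (lower g u y i * lower g u y j + g y $ i $ j)"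
    using du by blast
  have dw': "\<And>y i j. y \<in> U \<Longrightarrow> cov_deriv g w y i j = lam y * (lower g w y i * lower g w y j + g y $ i $ j)"
    using dw by blast
  have csm: "smooth_on U (\<lambda>z. gprod g u w z)"
    unfolding gprod_def by (intro sm_sum[OF U] sm_mult[OF U] vsm[OF su] lower_sm[OF sw])
  have dc: "\<And>y. y \<in> U \<Longrightarrow> (\<lambda>z. gprod g u w z) differentiable (at y)" using sm_diffat[OF U csm] .
  have dph: "phi differentiable (at x)" using sm_diffat[OF U sphi x] .
  have dlm: "lam differentiable (at x)" using sm_diffat[OF U slam x] .
  have dUL: "\<And>i. (\<lambda>z. lower g u z i) differentiable (at x)" using lower_diff[OF su x] .
  have dWL: "\<And>i. (\<lambda>z. lower g w z i) differentiable (at x)" using lower_diff[OF sw x] .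
  have du_d: "\<And>k. (\<lambda>z. u z $ k) differentiable (at x)" using vdiff[OF su x] .
  have dw_d: "\<And>k. (\<lambda>z. w z $ k) differentiable (at x)" using vdiff[OF sw x] .
  have ddu_d: "\<And>j k. partial j (\<lambda>z. u z $ k) differentiable (at x)"
    using sm_diffat[OF U sm_partial[OF vsm[OF su]] x] .
  have ddw_d: "\<And>j k. partial j (\<lambda>z. w z $ k) differentiable (at x)"
    using sm_diffat[OF U sm_partial[OF vsm[OF sw]] x] .
  have dG_d: "\<And>l. (\<lambda>z. Gv z l) differentiable (at x)" using G_diff[OF x] .
  have E1: "b j * (c * UL i + WL i) + phi x * P j * UL i + a j * (c * WL i + UL i) + lam x * P j * WL i
          = b i * (c * UL j + WL j) + phi x * P i * UL j + a i * (c * WL j + UL j) + lam x * P i * WL j" for i j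
  proof -
    have exp: "partial j (partial i (\<lambda>z. gprod g u w z)) x
       = b j * (c * UL i + WL i) + phi x * (P j * UL i + c * partial j (\<lambda>z. lower g u z i) x + partial j (\<lambda>z. lower g w z i) x)
       + (a j * (c * WL i + UL i) + lam x * (P j * WL i + c * partial j (\<lambda>z. lower g w z i) x + partial j (\<lambda>z. lower g u z i) x))"
      for i j
    proof -
      have "partial j (partial i (\<lambda>z. gprod g u w z)) x
         = partial j (\<lambda>z. phi z * (gprod g u w z * lower g u z i + lower g w z i)
            + lam z * (gprod g u w z * lower g w z i + lower g u z i)) x"
        by (rule partial_cong[OF U x]) (rule step_dc[OF su sw _ du' dw'])
      also have "\<dots> = partial j (\<lambda>z. phi z * (gprod g u w z * lower g u z i + lower g w z i)) x
            + partial j (\<lambda>z. lam z * (gprod g u w z * lower g w z i + lower g u z i)) x"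
        using dph dlm dc[OF x] dUL dWL
        by (intro partial_add) (auto intro!: differentiable_mult differentiable_add)
      also have "\<dots> = b j * (c * UL i + WL i) + phi x * (P j * UL i + c * partial j (\<lambda>z. lower g u z i) x + partial j (\<lambda>z. lower g w z i) x)
         + (a j * (c * WL i + UL i) + lam x * (P j * WL i + c * partial j (\<lambda>z. lower g w z i) x + partial j (\<lambda>z. lower g u z i) x))"
        unfolding pm3[OF dph dc[OF x] dUL dWL] pm3[OF dlm dc[OF x] dWL dUL]
        unfolding a_def b_def c_def P_def UL_def WL_def ..
      finally show ?thesis .
    qed
    have sch: "partial j (partial i (\<lambda>z. gprod g u w z)) x = partial i (partial j (\<lambda>z. gprod g u w z)) x"
      by (rule schwarz_C2[OF U x sm_C2[OF csm]])
    have s1: "partial j (\<lambda>z. lower g u z i) x = partial i (\<lambda>z. lower g u z j) x"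
      by (rule torse_dsym[OF su x du'[OF x]])
    have s2: "partial j (\<lambda>z. lower g w z i) x = partial i (\<lambda>z. lower g w z j) x"
      by (rule torse_dsym[OF sw x dw'[OF x]])
    show ?thesis using sch unfolding exp s1 s2 by (simp add: algebra_simps)
  qed
  have divu: "\<And>y. y \<in> U \<Longrightarrow> (\<Sum>k\<in>UNIV. partial k (\<lambda>z. u z $ k) y) + (\<Sum>l\<in>UNIV. Gv y l * u y $ l) = (N - 1) * phi y"
    unfolding N_def using torse_div[OF su _ du'] uu by blast
  have divw: "\<And>y. y \<in> U \<Longrightarrow> (\<Sum>k\<in>UNIV. partial k (\<lambda>z. w z $ k) y) + (\<Sum>l\<in>UNIV. Gv y l * w y $ l) = (N - 1) * lam y"
    unfolding N_def using torse_div[OF sw _ dw'] ww by blast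
  have ddiv: "partial j (\<lambda>y. (\<Sum>k\<in>UNIV. partial k (\<lambda>z. v z $ k) y) + (\<Sum>l\<in>UNIV. Gv y l * v y $ l)) x
     = (\<Sum>k\<in>UNIV. partial j (partial k (\<lambda>z. v z $ k)) x)
       + (\<Sum>l\<in>UNIV. partial j (\<lambda>z. Gv z l) x * v x $ l + Gv x l * partial j (\<lambda>z. v z $ l) x)"
    if sv: "smooth_vf_on U v" for v j
  proof -
    have d1: "\<And>k. partial k (\<lambda>z. v z $ k) differentiable (at x)"
      using sm_diffat[OF U sm_partial[OF vsm[OF sv]] x] .
    have d2: "\<And>l. (\<lambda>z. v z $ l) differentiable (at x)" using vdiff[OF sv x] .
    have "partial j (\<lambda>y. (\<Sum>k\<in>UNIV. partial k (\<lambda>z. v z $ k) y) + (\<Sum>l\<in>UNIV. Gv y l * v y $ l)) x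
       = partial j (\<lambda>y. \<Sum>k\<in>UNIV. partial k (\<lambda>z. v z $ k) y) x + partial j (\<lambda>y. \<Sum>l\<in>UNIV. Gv y l * v y $ l) x"
      using d1 d2 dG_d by (intro partial_add differentiable_sum differentiable_mult) auto
    also have "partial j (\<lambda>y. \<Sum>k\<in>UNIV. partial k (\<lambda>z. v z $ k) y) x = (\<Sum>k\<in>UNIV. partial j (partial k (\<lambda>z. v z $ k)) x)"
      using d1 by (intro partial_sum) auto
    also have "partial j (\<lambda>y. \<Sum>l\<in>UNIV. Gv y l * v y $ l) x = (\<Sum>l\<in>UNIV. partial j (\<lambda>y. Gv y l * v y $ l) x)"
      using d2 dG_d by (intro partial_sum differentiable_mult) auto
    also have "\<dots> = (\<Sum>l\<in>UNIV. partial j (\<lambda>z. Gv z l) x * v x $ l + Gv x l * partial j (\<lambda>z. v z $ l) x)"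
      using d2 dG_d by (intro sum.cong refl partial_mult) auto
    finally show ?thesis .
  qed
  have ddivu: "partial j (\<lambda>y. (\<Sum>k\<in>UNIV. partial k (\<lambda>z. u z $ k) y) + (\<Sum>l\<in>UNIV. Gv y l * u y $ l)) x = (N - 1) * b j" for j
  proof -
    have "partial j (\<lambda>y. (\<Sum>k\<in>UNIV. partial k (\<lambda>z. u z $ k) y) + (\<Sum>l\<in>UNIV. Gv y l * u y $ l)) x
        = partial j (\<lambda>y. (N - 1) * phi y) x" by (rule partial_cong[OF U x divu])
    also have "\<dots> = (N - 1) * b j" unfolding b_def by (rule partial_cmult[OF dph])
    finally show ?thesis .
  qed
  have ddivw: "partial j (\<lambda>y. (\<Sum>k\<in>UNIV. partial k (\<lambda>z. w z $ k) y) + (\<Sum>l\<in>UNIV. Gv y l * w y $ l)) x = (N - 1) * a j" for j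
  proof -
    have "partial j (\<lambda>y. (\<Sum>k\<in>UNIV. partial k (\<lambda>z. w z $ k) y) + (\<Sum>l\<in>UNIV. Gv y l * w y $ l)) x
        = partial j (\<lambda>y. (N - 1) * lam y) x" by (rule partial_cong[OF U x divw])
    also have "\<dots> = (N - 1) * a j" unfolding a_def by (rule partial_cmult[OF dlm])
    finally show ?thesis .
  qed
  have Bf: "(\<Sum>j\<in>UNIV. u y $ j * partial j (\<lambda>z. w z $ k) y - w y $ j * partial j (\<lambda>z. u z $ k) y)
     = (lam y * gprod g u w y - phi y) * w y $ k + (lam y - phi y * gprod g u w y) * u y $ k" if y: "y \<in> U" for y k
  proof -
    have A: "(\<Sum>j\<in>UNIV. u y $ j * partial j (\<lambda>z. w z $ k) y)
       = lam y * ((\<Sum>j\<in>UNIV. u y $ j * lower g w y j) * w y $ k + u y $ k)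
         - (\<Sum>j\<in>UNIV. \<Sum>l\<in>UNIV. u y $ j * (christoffel g y k j l * w y $ l))"
    proof -
      have "(\<Sum>j\<in>UNIV. u y $ j * partial j (\<lambda>z. w z $ k) y) = (\<Sum>j\<in>UNIV.
          lam y * (u y $ j * lower g w y j) * w y $ k + lam y * (u y $ j * (if k = j then 1 else 0))
          - (\<Sum>l\<in>UNIV. u y $ j * (christoffel g y k j l * w y $ l)))"
        by (rule sum.cong[OF refl]) (simp add: torse_dup[OF sw y dw'[OF y]] sum_distrib_left algebra_simps)
      also have "\<dots> = lam y * (\<Sum>j\<in>UNIV. u y $ j * lower g w y j) * w y $ k + lam y * (\<Sum>j\<in>UNIV. u y $ j * (if k = j then 1 else 0))
          - (\<Sum>j\<in>UNIV. \<Sum>l\<in>UNIV. u y $ j * (christoffel g y k j l * w y $ l))"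
        by (simp only: sum.distrib sum_subtractf sum_distrib_left sum_distrib_right)
      also have "(\<Sum>j\<in>UNIV. u y $ j * (if k = j then 1 else 0)) = u y $ k"
        using delta_l[of k "\<lambda>j. u y $ j"] by (simp add: mult.commute)
      finally show ?thesis by (simp add: algebra_simps)
    qed
    have B: "(\<Sum>j\<in>UNIV. w y $ j * partial j (\<lambda>z. u z $ k) y)
       = phi y * ((\<Sum>j\<in>UNIV. w y $ j * lower g u y j) * u y $ k + w y $ k)
         - (\<Sum>j\<in>UNIV. \<Sum>l\<in>UNIV. w y $ j * (christoffel g y k j l * u y $ l))"
    proof -
      have "(\<Sum>j\<in>UNIV. w y $ j * partial j (\<lambda>z. u z $ k) y) = (\<Sum>j\<in>UNIV.
          phi y * (w y $ j * lower g u y j) * u y $ k + phi y * (w y $ j * (if k = j then 1 else 0))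
          - (\<Sum>l\<in>UNIV. w y $ j * (christoffel g y k j l * u y $ l)))"
        by (rule sum.cong[OF refl]) (simp add: torse_dup[OF su y du'[OF y]] sum_distrib_left algebra_simps)
      also have "\<dots> = phi y * (\<Sum>j\<in>UNIV. w y $ j * lower g u y j) * u y $ k + phi y * (\<Sum>j\<in>UNIV. w y $ j * (if k = j then 1 else 0))
          - (\<Sum>j\<in>UNIV. \<Sum>l\<in>UNIV. w y $ j * (christoffel g y k j l * u y $ l))"
        by (simp only: sum.distrib sum_subtractf sum_distrib_left sum_distrib_right)
      also have "(\<Sum>j\<in>UNIV. w y $ j * (if k = j then 1 else 0)) = w y $ k"
        using delta_l[of k "\<lambda>j. w y $ j"] by (simp add: mult.commute)
      finally show ?thesis by (simp add: algebra_simps)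
    qed
    have X: "(\<Sum>j\<in>UNIV. \<Sum>l\<in>UNIV. w y $ j * (christoffel g y k j l * u y $ l))
        = (\<Sum>j\<in>UNIV. \<Sum>l\<in>UNIV. u y $ j * (christoffel g y k j l * w y $ l))"
    proof -
      have "(\<Sum>j\<in>UNIV. \<Sum>l\<in>UNIV. w y $ j * (christoffel g y k j l * u y $ l))
          = (\<Sum>l\<in>UNIV. \<Sum>j\<in>UNIV. w y $ j * (christoffel g y k j l * u y $ l))" by (rule sum.swap)
      also have "\<dots> = (\<Sum>l\<in>UNIV. \<Sum>j\<in>UNIV. u y $ l * (christoffel g y k l j * w y $ j))"
        by (intro sum.cong refl) (simp add: chr_sym[OF y, of k] mult_ac)
      finally show ?thesis .
    qed
    have c1: "(\<Sum>j\<in>UNIV. u y $ j * lower g w y j) = gprod g u w y" by (simp add: gprod_def)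
    have c2: "(\<Sum>j\<in>UNIV. w y $ j * lower g u y j) = gprod g u w y" using gprod_sym[OF y, of w u] by (simp add: gprod_def)
    show ?thesis unfolding sum_subtractf A B X c1 c2 by (simp add: algebra_simps)
  qed

  have dBf: "partial k (\<lambda>y. \<Sum>j\<in>UNIV. u y $ j * partial j (\<lambda>z. w z $ k) y - w y $ j * partial j (\<lambda>z. u z $ k) y) x
     = (\<Sum>j\<in>UNIV. partial k (\<lambda>z. u z $ j) x * partial j (\<lambda>z. w z $ k) x + u x $ j * partial k (partial j (\<lambda>z. w z $ k)) x
        - (partial k (\<lambda>z. w z $ j) x * partial j (\<lambda>z. u z $ k) x + w x $ j * partial k (partial j (\<lambda>z. u z $ k)) x))" for k
  proof -
    have "partial k (\<lambda>y. \<Sum>j\<in>UNIV. u y $ j * partial j (\<lambda>z. w z $ k) y - w y $ j * partial j (\<lambda>z. u z $ k) y) x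
       = (\<Sum>j\<in>UNIV. partial k (\<lambda>y. u y $ j * partial j (\<lambda>z. w z $ k) y - w y $ j * partial j (\<lambda>z. u z $ k) y) x)"
      using du_d dw_d ddu_d ddw_d by (intro partial_sum differentiable_diff differentiable_mult) auto
    also have "\<dots> = (\<Sum>j\<in>UNIV. partial k (\<lambda>z. u z $ j) x * partial j (\<lambda>z. w z $ k) x + u x $ j * partial k (partial j (\<lambda>z. w z $ k)) x
        - (partial k (\<lambda>z. w z $ j) x * partial j (\<lambda>z. u z $ k) x + w x $ j * partial k (partial j (\<lambda>z. u z $ k)) x))"
    proof (rule sum.cong[OF refl])
      fix j
      have "partial k (\<lambda>y. u y $ j * partial j (\<lambda>z. w z $ k) y - w y $ j * partial j (\<lambda>z. u z $ k) y) x
         = partial k (\<lambda>y. u y $ j * partial j (\<lambda>z. w z $ k) y) x - partial k (\<lambda>y. w y $ j * partial j (\<lambda>z. u z $ k) y) x"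
        using du_d dw_d ddu_d ddw_d by (intro partial_diff differentiable_mult)
      also have "\<dots> = partial k (\<lambda>z. u z $ j) x * partial j (\<lambda>z. w z $ k) x + u x $ j * partial k (partial j (\<lambda>z. w z $ k)) x
        - (partial k (\<lambda>z. w z $ j) x * partial j (\<lambda>z. u z $ k) x + w x $ j * partial k (partial j (\<lambda>z. u z $ k)) x)"
        using du_d dw_d ddu_d ddw_d by (simp add: partial_mult)
      finally show "partial k (\<lambda>y. u y $ j * partial j (\<lambda>z. w z $ k) y - w y $ j * partial j (\<lambda>z. u z $ k) y) x
         = partial k (\<lambda>z. u z $ j) x * partial j (\<lambda>z. w z $ k) x + u x $ j * partial k (partial j (\<lambda>z. w z $ k)) x
        - (partial k (\<lambda>z. w z $ j) x * partial j (\<lambda>z. u z $ k) x + w x $ j * partial k (partial j (\<lambda>z. u z $ k)) x)" .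
    qed
    finally show ?thesis .
  qed
  have dBf': "partial k (\<lambda>y. \<Sum>j\<in>UNIV. u y $ j * partial j (\<lambda>z. w z $ k) y - w y $ j * partial j (\<lambda>z. u z $ k) y) x
     = (a k * c + lam x * P k - b k) * w x $ k + (lam x * c - phi x) * partial k (\<lambda>z. w z $ k) x
      + (a k - (b k * c + phi x * P k)) * u x $ k + (lam x - phi x * c) * partial k (\<lambda>z. u z $ k) x" for k
  proof -
    have "partial k (\<lambda>y. \<Sum>j\<in>UNIV. u y $ j * partial j (\<lambda>z. w z $ k) y - w y $ j * partial j (\<lambda>z. u z $ k) y) x
      = partial k (\<lambda>y. (lam y * gprod g u w y - phi y) * w y $ k + (lam y - phi y * gprod g u w y) * u y $ k) x"
      by (rule partial_cong[OF U x Bf])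
    also have "\<dots> = (a k * c + lam x * P k - b k) * w x $ k + (lam x * c - phi x) * partial k (\<lambda>z. w z $ k) x
      + (a k - (b k * c + phi x * P k)) * u x $ k + (lam x - phi x * c) * partial k (\<lambda>z. u z $ k) x"
      unfolding pBf[OF dlm dc[OF x] dph dw_d du_d] a_def b_def c_def P_def ..
    finally show ?thesis .
  qed
  have core: "(\<Sum>k\<in>UNIV. \<Sum>j\<in>UNIV. partial k (\<lambda>z. u z $ j) x * partial j (\<lambda>z. w z $ k) x + u x $ j * partial k (partial j (\<lambda>z. w z $ k)) x
        - (partial k (\<lambda>z. w z $ j) x * partial j (\<lambda>z. u z $ k) x + w x $ j * partial k (partial j (\<lambda>z. u z $ k)) x))
     + (\<Sum>l\<in>UNIV. Gv x l * (\<Sum>j\<in>UNIV. u x $ j * partial j (\<lambda>z. w z $ l) x - w x $ j * partial j (\<lambda>z. u z $ l) x))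
   = (\<Sum>j\<in>UNIV. u x $ j * ((\<Sum>k\<in>UNIV. partial j (partial k (\<lambda>z. w z $ k)) x)
        + (\<Sum>l\<in>UNIV. partial j (\<lambda>z. Gv z l) x * w x $ l + Gv x l * partial j (\<lambda>z. w z $ l) x)))
     - (\<Sum>j\<in>UNIV. w x $ j * ((\<Sum>k\<in>UNIV. partial j (partial k (\<lambda>z. u z $ k)) x)
        + (\<Sum>l\<in>UNIV. partial j (\<lambda>z. Gv z l) x * u x $ l + Gv x l * partial j (\<lambda>z. u z $ l) x)))"
  proof (rule core_alg)
    show "partial k (partial j (\<lambda>z. u z $ l)) x = partial j (partial k (\<lambda>z. u z $ l)) x" for k j l
      by (rule schwarz_C2[OF U x sm_C2[OF vsm[OF su]]])
    show "partial k (partial j (\<lambda>z. w z $ l)) x = partial j (partial k (\<lambda>z. w z $ l)) x" for k j l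
      by (rule schwarz_C2[OF U x sm_C2[OF vsm[OF sw]]])
    show "partial j (\<lambda>z. Gv z l) x = partial l (\<lambda>z. Gv z j) x" for j l by (rule dG_sym[OF x])
  qed
  have RHS: "(\<Sum>j\<in>UNIV. u x $ j * ((\<Sum>k\<in>UNIV. partial j (partial k (\<lambda>z. w z $ k)) x)
        + (\<Sum>l\<in>UNIV. partial j (\<lambda>z. Gv z l) x * w x $ l + Gv x l * partial j (\<lambda>z. w z $ l) x)))
     - (\<Sum>j\<in>UNIV. w x $ j * ((\<Sum>k\<in>UNIV. partial j (partial k (\<lambda>z. u z $ k)) x)
        + (\<Sum>l\<in>UNIV. partial j (\<lambda>z. Gv z l) x * u x $ l + Gv x l * partial j (\<lambda>z. u z $ l) x)))
     = (N - 1) * ((\<Sum>j\<in>UNIV. u x $ j * a j) - (\<Sum>j\<in>UNIV. w x $ j * b j))"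
    unfolding ddiv[OF su, symmetric] ddiv[OF sw, symmetric] ddivu ddivw
    by (simp only: mult.left_commute[of _ "N - 1"] sum_distrib_left[symmetric] right_diff_distrib[symmetric])
  have LHS: "(\<Sum>k\<in>UNIV. \<Sum>j\<in>UNIV. partial k (\<lambda>z. u z $ j) x * partial j (\<lambda>z. w z $ k) x + u x $ j * partial k (partial j (\<lambda>z. w z $ k)) x
        - (partial k (\<lambda>z. w z $ j) x * partial j (\<lambda>z. u z $ k) x + w x $ j * partial k (partial j (\<lambda>z. u z $ k)) x))
     + (\<Sum>l\<in>UNIV. Gv x l * (\<Sum>j\<in>UNIV. u x $ j * partial j (\<lambda>z. w z $ l) x - w x $ j * partial j (\<lambda>z. u z $ l) x))
     = (\<Sum>k\<in>UNIV. w x $ k * (c * a k + lam x * P k - b k)) + (lam x * c - phi x) * (N - 1) * lam x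
       + (\<Sum>k\<in>UNIV. u x $ k * (a k - c * b k - phi x * P k)) + (lam x - phi x * c) * (N - 1) * phi x"
  proof -
    have "(\<Sum>k\<in>UNIV. \<Sum>j\<in>UNIV. partial k (\<lambda>z. u z $ j) x * partial j (\<lambda>z. w z $ k) x + u x $ j * partial k (partial j (\<lambda>z. w z $ k)) x
        - (partial k (\<lambda>z. w z $ j) x * partial j (\<lambda>z. u z $ k) x + w x $ j * partial k (partial j (\<lambda>z. u z $ k)) x))
      = (\<Sum>k\<in>UNIV. (a k * c + lam x * P k - b k) * w x $ k + (lam x * c - phi x) * partial k (\<lambda>z. w z $ k) x
      + (a k - (b k * c + phi x * P k)) * u x $ k + (lam x - phi x * c) * partial k (\<lambda>z. u z $ k) x)"
      using dBf dBf' by simp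
    also have "\<dots> = (\<Sum>k\<in>UNIV. w x $ k * (c * a k + lam x * P k - b k) + (lam x * c - phi x) * partial k (\<lambda>z. w z $ k) x
       + (u x $ k * (a k - c * b k - phi x * P k) + (lam x - phi x * c) * partial k (\<lambda>z. u z $ k) x))"
      by (rule sum.cong[OF refl]) (simp add: algebra_simps)
    also have "\<dots> = (\<Sum>k\<in>UNIV. w x $ k * (c * a k + lam x * P k - b k)) + (lam x * c - phi x) * (\<Sum>k\<in>UNIV. partial k (\<lambda>z. w z $ k) x)
       + ((\<Sum>k\<in>UNIV. u x $ k * (a k - c * b k - phi x * P k)) + (lam x - phi x * c) * (\<Sum>k\<in>UNIV. partial k (\<lambda>z. u z $ k) x))"
      by (simp only: sum.distrib sum_distrib_left)
    also have "\<dots> = (\<Sum>k\<in>UNIV. w x $ k * (c * a k + lam x * P k - b k)) + (lam x * c - phi x) * (\<Sum>k\<in>UNIV. partial k (\<lambda>z. w z $ k) x)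
       + (\<Sum>k\<in>UNIV. u x $ k * (a k - c * b k - phi x * P k)) + (lam x - phi x * c) * (\<Sum>k\<in>UNIV. partial k (\<lambda>z. u z $ k) x)"
      by (simp only: add.assoc)
    finally have L1: "(\<Sum>k\<in>UNIV. \<Sum>j\<in>UNIV. partial k (\<lambda>z. u z $ j) x * partial j (\<lambda>z. w z $ k) x + u x $ j * partial k (partial j (\<lambda>z. w z $ k)) x
        - (partial k (\<lambda>z. w z $ j) x * partial j (\<lambda>z. u z $ k) x + w x $ j * partial k (partial j (\<lambda>z. u z $ k)) x))
      = (\<Sum>k\<in>UNIV. w x $ k * (c * a k + lam x * P k - b k)) + (lam x * c - phi x) * (\<Sum>k\<in>UNIV. partial k (\<lambda>z. w z $ k) x)
       + (\<Sum>k\<in>UNIV. u x $ k * (a k - c * b k - phi x * P k)) + (lam x - phi x * c) * (\<Sum>k\<in>UNIV. partial k (\<lambda>z. u z $ k) x)" .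
    have "(\<Sum>l\<in>UNIV. Gv x l * (\<Sum>j\<in>UNIV. u x $ j * partial j (\<lambda>z. w z $ l) x - w x $ j * partial j (\<lambda>z. u z $ l) x))
       = (\<Sum>l\<in>UNIV. Gv x l * ((lam x * c - phi x) * w x $ l + (lam x - phi x * c) * u x $ l))"
      unfolding Bf[OF x] c_def ..
    also have "\<dots> = (lam x * c - phi x) * (\<Sum>l\<in>UNIV. Gv x l * w x $ l) + (lam x - phi x * c) * (\<Sum>l\<in>UNIV. Gv x l * u x $ l)"
      by (simp only: distrib_left sum.distrib sum_distrib_left mult.left_commute[of "Gv x _"])
    finally have L2: "(\<Sum>l\<in>UNIV. Gv x l * (\<Sum>j\<in>UNIV. u x $ j * partial j (\<lambda>z. w z $ l) x - w x $ j * partial j (\<lambda>z. u z $ l) x))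
       = (lam x * c - phi x) * (\<Sum>l\<in>UNIV. Gv x l * w x $ l) + (lam x - phi x * c) * (\<Sum>l\<in>UNIV. Gv x l * u x $ l)" .
    have "(lam x * c - phi x) * (\<Sum>k\<in>UNIV. partial k (\<lambda>z. w z $ k) x) + (lam x * c - phi x) * (\<Sum>l\<in>UNIV. Gv x l * w x $ l)
        = (lam x * c - phi x) * (N - 1) * lam x"
      using divw[OF x] by (simp add: distrib_left[symmetric])
    moreover have "(lam x - phi x * c) * (\<Sum>k\<in>UNIV. partial k (\<lambda>z. u z $ k) x) + (lam x - phi x * c) * (\<Sum>l\<in>UNIV. Gv x l * u x $ l)
        = (lam x - phi x * c) * (N - 1) * phi x"
      using divu[OF x] by (simp add: distrib_left[symmetric])
    ultimately show ?thesis unfolding L1 L2 by linarith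
  qed
  have E2s: "(\<Sum>k\<in>UNIV. w x $ k * (c * a k + lam x * P k - b k)) + (lam x * c - phi x) * (N - 1) * lam x
       + (\<Sum>k\<in>UNIV. u x $ k * (a k - c * b k - phi x * P k)) + (lam x - phi x * c) * (N - 1) * phi x
     = (N - 1) * ((\<Sum>j\<in>UNIV. u x $ j * a j) - (\<Sum>j\<in>UNIV. w x $ j * b j))"
    using core LHS RHS by simp

  define av where "av = (\<chi> i. a i)"
  define bv where "bv = (\<chi> i. b i)"
  define Pv where "Pv = (\<chi> i. P i)"
  define UU where "UU = (\<chi> i. UL i)"
  define WW where "WW = (\<chi> i. WL i)"
  have h1: "u x \<bullet> UU = -1" unfolding UU_def UL_def inner_chi using uu x unfolding gprod_def by blast
  have h2: "w x \<bullet> WW = -1" unfolding WW_def WL_def inner_chi using ww x unfolding gprod_def by blast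
  have h3: "u x \<bullet> WW = c" unfolding WW_def WL_def inner_chi c_def gprod_def ..
  have h4: "w x \<bullet> UU = c" unfolding UU_def UL_def inner_chi c_def using gprod_sym[OF x, of w u] unfolding gprod_def by simp
  have hb: "bv = (- (u x \<bullet> bv)) *\<^sub>R UU"
    unfolding bv_def UU_def UL_def inner_chi vec_eq_iff using dphi x unfolding b_def by (simp add: mult.commute)
  have hP: "Pv = (phi x * c + lam x) *\<^sub>R UU + (phi x + lam x * c) *\<^sub>R WW"
    unfolding Pv_def UU_def WW_def vec_eq_iff P_def UL_def WL_def c_def
    by (simp add: step_dc[OF su sw x du'[OF x] dw'[OF x]] algebra_simps)
  have E1v: "bv$j*(c*UU$i + WW$i) + phi x*Pv$j*UU$i + av$j*(c*WW$i + UU$i) + lam x*Pv$j*WW$i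
      = bv$i*(c*UU$j + WW$j) + phi x*Pv$i*UU$j + av$i*(c*WW$j + UU$j) + lam x*Pv$i*WW$j" for i j
    unfolding av_def bv_def Pv_def UU_def WW_def using E1[of j i] by simp
  have E2v: "w x \<bullet> (c *\<^sub>R av + lam x *\<^sub>R Pv - bv) + (lam x*c - phi x)*(N-1)*lam x + u x \<bullet> (av - c *\<^sub>R bv - phi x *\<^sub>R Pv)
              + (lam x - phi x*c)*(N-1)*phi x = (N-1)*(u x \<bullet> av - w x \<bullet> bv)"
  proof -
    have e1: "c *\<^sub>R av + lam x *\<^sub>R Pv - bv = (\<chi> k. c * a k + lam x * P k - b k)"
      unfolding av_def Pv_def bv_def by (simp add: vec_eq_iff)
    have e2: "av - c *\<^sub>R bv - phi x *\<^sub>R Pv = (\<chi> k. a k - c * b k - phi x * P k)"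
      unfolding av_def Pv_def bv_def by (simp add: vec_eq_iff)
    have e3: "u x \<bullet> av = (\<Sum>j\<in>UNIV. u x $ j * a j)" unfolding av_def inner_chi ..
    have e4: "w x \<bullet> bv = (\<Sum>j\<in>UNIV. w x $ j * b j)" unfolding bv_def inner_chi ..
    show ?thesis unfolding e1 e2 e3 e4 inner_chi using E2s .
  qed
  have hc: "c\<^sup>2 \<noteq> 1" using uw x unfolding c_def by blast
  have hN: "N \<noteq> 2" using dim unfolding N_def by simp
  have "av = (- (w x \<bullet> av)) *\<^sub>R WW"
    by (rule final_alg[OF h1 h2 h3 h4 hb hP E1v E2v hc hN])
  then have "av $ i = (- (w x \<bullet> av)) * WW $ i" by (simp add: vec_eq_iff)
  then show ?thesis unfolding av_def WW_def WL_def inner_chi a_def by simp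
qed

end

theorem mainTheorem4:
  fixes U :: "(real^'n::finite) set"
    and g :: "real^'n \<Rightarrow> real^'n^'n"
    and u w :: "real^'n \<Rightarrow> real^'n"
    and phi lam :: "real^'n \<Rightarrow> real"
  assumes dim: "CARD('n) > 3"
    and U: "open U"
    and metric: "lorentz_metric_on U g"
    and su: "smooth_vf_on U u" and sw: "smooth_vf_on U w"
    and sphi: "smooth_on U phi" and slam: "smooth_on U lam"
    and uu: "\<forall>x\<in>U. gprod g u u x = -1"
    and ww: "\<forall>x\<in>U. gprod g w w x = -1"
    and uw: "\<forall>x\<in>U. (gprod g u w x)\<^sup>2 \<noteq> 1"
    and du: "\<forall>x\<in>U. \<forall>i j. cov_deriv g u x i j
               = phi x * (lower g u x i * lower g u x j + g x $ i $ j)"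
    and dw: "\<forall>x\<in>U. \<forall>i j. cov_deriv g w x i j
               = lam x * (lower g w x i * lower g w x j + g x $ i $ j)"
    and dphi: "\<forall>x\<in>U. \<forall>i. partial i phi x
               = - lower g u x i * (\<Sum>k\<in>UNIV. u x $ k * partial k phi x)"
  shows "\<forall>x\<in>U. \<forall>i. partial i lam x
               = - lower g w x i * (\<Sum>k\<in>UNIV. w x $ k * partial k lam x)"
proof -
  interpret mst U g using U metric by unfold_locales
  show ?thesis using main_at[OF dim su sw sphi slam uu ww uw du dw dphi] by blast
qed

end
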